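(* Consider the baseline dynamic game described in the context, with standing assumptions (A1)–(A4). For any discount factor $\delta\in[0,1)$ and any $\theta'\in[\underline{\theta},\overline{\theta}]$, in the game where the buyer's type is distributed according to $F_{\theta'}$ (the distribution $F$ conditional on $\theta\in[\underline{\theta},\theta']$), there exists a Perfect Bayesian equilibrium in which the seller offers $(\overline{x},\overline{u}(\underline{\theta}))$ in period $t=0$, all buyer types accept it at $t=0$, and the seller's revenue equals $\overline{u}(\underline{\theta})$.
   Context: Fix $\underline{\theta}<\overline{\theta}$ and $0<\underline{x}<\overline{x}$. A buyer has a private type $\theta\in[\underline{\theta},\overline{\theta}]$ drawn from a CDF $F$ with density $f$. Let $v:[0,\overline{x}]\to\mathbb{R}$ be strictly concave and continuously differentiable with $v(0)=0$ (A1). For $x\in[\underline{x},\overline{x}]$, $u(x,\theta)=\max_{0\le x'\le x}[v(x')+\theta x']$; the seller has zero cost. $x^e(\theta)$ is the unique maximizer of $v(x')+\theta x'$ over $[0,\overline{x}]$. Standing assumptions: (A2) $0<m\le f\le M$ for constants $m,M$, and $\theta-\frac{1-F(\theta)}{f(\theta)}$ is strictly increasing; (A3) $0<x^e(\underline{\theta})\le\underline{x}$; (A4) $v(x^e(\theta))+\big(\theta-\frac{1-F(\theta)}{f(\theta)}\big)x^e(\theta)\ge0$ for all $\theta$. Define $\overline{u}(\underline{\theta})=v(x^e(\underline{\theta}))+\underline{\theta}x^e(\underline{\theta})$. Dynamic game: discrete time $t=0,1,\dots$, discount factor $\delta$. Each period the seller (possibly randomizing) posts one offer $(x_t,p_t)\in[\underline{x},\overline{x}]\times\mathbb{R}$;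 a buyer who has not yet purchased accepts or waits. Acceptance by type $\theta$ at $t$ gives the buyer $\delta^t(u(x_t,\theta)-p_t)$ and the seller $\delta^tp_t$, ending the game for that buyer; no purchase gives $0$. Histories record past offers and decisions; seller strategies map histories to distributions over offers; buyer strategies map (history, current offer, type) to accept/wait, measurable in type. Equilibrium means Perfect Bayesian equilibrium (sequential rationality given beliefs over remaining types; Bayes' rule wherever possible). *)

theory Defs
  imports "HOL-Probability.Probability"
begin

definition strictly_concave_on :: "real set \<Rightarrow> (real \<Rightarrow> real) \<Rightarrow> bool" where
  "strictly_concave_on S g \<longleftrightarrow>
     (\<forall>x\<in>S. \<forall>y\<in>S. x \<noteq> y \<longrightarrow>
        (\<forall>t::real. 0 < t \<and> t < 1 \<longrightarrow> (1 - t) * g x + t * g y < g ((1 - t) * x + t * y)))"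

definition C1_on_interval :: "(real \<Rightarrow> real) \<Rightarrow> real \<Rightarrow> real \<Rightarrow> bool" where
  "C1_on_interval g a b \<longleftrightarrow>
     (\<exists>D. (\<forall>x\<in>{a..b}. (g has_real_derivative D x) (at x within {a..b})) \<and> continuous_on {a..b} D)"

definition u_fun :: "(real \<Rightarrow> real) \<Rightarrow> real \<Rightarrow> real \<Rightarrow> real" where
  "u_fun v x \<theta> = (SUP x'\<in>{0..x}. v x' + \<theta> * x')"

definition xe :: "(real \<Rightarrow> real) \<Rightarrow> real \<Rightarrow> real \<Rightarrow> real" where
  "xe v xbar \<theta> = (THE x. x \<in> {0..xbar} \<and> (\<forall>y\<in>{0..xbar}. v y + \<theta> * y \<le> v x + \<theta> * x))"

definition ubar :: "(real \<Rightarrow> real) \<Rightarrow> real \<Rightarrow> real \<Rightarrow> real" where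
  "ubar v xbar \<theta>l = v (xe v xbar \<theta>l) + \<theta>l * xe v xbar \<theta>l"

text \<open>For theta' = theta_l this
  conditioning event is null; F_{theta_l} is read as the point mass at theta_l.\<close>
definition type_dist :: "real \<Rightarrow> real \<Rightarrow> (real \<Rightarrow> real) \<Rightarrow> real measure" where
  "type_dist \<theta>l \<theta>h f = density lborel (\<lambda>\<theta>. ennreal (indicator {\<theta>l..\<theta>h} \<theta> * f \<theta>))"

definition cond_type_dist :: "real \<Rightarrow> real \<Rightarrow> (real \<Rightarrow> real) \<Rightarrow> real \<Rightarrow> real measure" where
  "cond_type_dist \<theta>l \<theta>h f \<theta>' =
     (if \<theta>' = \<theta>l then return borel \<theta>l
      else uniform_measure (type_dist \<theta>l \<theta>h f) {\<theta>l..\<theta>'})"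

text \<open>An offer is (quantity, price). A (non-terminal) history is the list of past offers,
  all of which were rejected (acceptance ends the game).\<close>
type_synonym offer = "real \<times> real"
type_synonym hist = "offer list"

text \<open>The seller's randomisation is represented by an
  auxiliary draw r_t, i.i.d. uniform on [0,1] in each period, so a behaviour strategy is
  a (jointly measurable) map s(h, r) from the history and the current draw to an offer.\<close>
type_synonym seller_strategy = "hist \<Rightarrow> real \<Rightarrow> offer"
text \<open>Buyer strategies: accept (True) / wait (False) as a function of history,
  current offer and type.\<close>
type_synonym buyer_strategy = "hist \<Rightarrow> offer \<Rightarrow> real \<Rightarrow> bool"

definition rnd :: "(nat \<Rightarrow> real) measure" where
  "rnd = Pi\<^sub>M UNIV (\<lambda>_. uniform_measure lborel {0..1::real})"

definition valid_offer :: "real \<Rightarrow> real \<Rightarrow> offer \<Rightarrow> bool" where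
  "valid_offer xl xh q \<longleftrightarrow> fst q \<in> {xl..xh}"

definition valid_hist :: "real \<Rightarrow> real \<Rightarrow> hist \<Rightarrow> bool" where
  "valid_hist xl xh h \<longleftrightarrow> (\<forall>q\<in>set h. valid_offer xl xh q)"

definition seller_valid :: "real \<Rightarrow> real \<Rightarrow> seller_strategy \<Rightarrow> bool" where
  "seller_valid xl xh s \<longleftrightarrow>
     (\<forall>h r. valid_offer xl xh (s h r)) \<and>
     (\<forall>n. (\<lambda>(g, r). s (map g [0..<n]) r)
            \<in> (Pi\<^sub>M {0..<n} (\<lambda>_. borel) \<Otimes>\<^sub>M borel) \<rightarrow>\<^sub>M (borel :: offer measure))"

text \<open>History reached k periods after the (seller) node h if all offers are rejected,
  using draws omega 0, omega 1, ...\<close>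
fun hst :: "seller_strategy \<Rightarrow> hist \<Rightarrow> (nat \<Rightarrow> real) \<Rightarrow> nat \<Rightarrow> hist" where
  "hst s h \<omega> 0 = h"
| "hst s h \<omega> (Suc k) = hst s h \<omega> k @ [s (hst s h \<omega> k) (\<omega> k)]"

definition bhist :: "seller_strategy \<Rightarrow> hist \<Rightarrow> offer \<Rightarrow> (nat \<Rightarrow> real) \<Rightarrow> nat \<Rightarrow> hist" where
  "bhist s h q \<omega> k = (case k of 0 \<Rightarrow> h | Suc j \<Rightarrow> hst s (h @ [q]) \<omega> j)"

definition boff :: "seller_strategy \<Rightarrow> hist \<Rightarrow> offer \<Rightarrow> (nat \<Rightarrow> real) \<Rightarrow> nat \<Rightarrow> offer" where
  "boff s h q \<omega> k = (case k of 0 \<Rightarrow> q | Suc j \<Rightarrow> s (hst s (h @ [q]) \<omega> j) (\<omega> j))"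

definition disc_first :: "real \<Rightarrow> (nat \<Rightarrow> bool) \<Rightarrow> (nat \<Rightarrow> real) \<Rightarrow> real" where
  "disc_first \<delta> A g = (if \<exists>k. A k then \<delta> ^ (LEAST k. A k) * g (LEAST k. A k) else 0)"

text \<open>Expected continuation payoff (in current-period units) of a buyer of type theta at
  node (h, q) who uses the type-specific plan c, against seller strategy s.\<close>
definition buyer_val ::
  "(real \<Rightarrow> real) \<Rightarrow> real \<Rightarrow> seller_strategy \<Rightarrow> (hist \<Rightarrow> offer \<Rightarrow> bool)
     \<Rightarrow> hist \<Rightarrow> offer \<Rightarrow> real \<Rightarrow> real" where
  "buyer_val v \<delta> s c h q \<theta> =
     (\<integral>\<omega>. disc_first \<delta> (\<lambda>k. c (bhist s h q \<omega> k) (boff s h q \<omega> k))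
              (\<lambda>k. u_fun v (fst (boff s h q \<omega> k)) \<theta> - snd (boff s h q \<omega> k)) \<partial>rnd)"

text \<open>Seller's expected continuation revenue (in current-period units) at seller node h,
  with belief mu over the remaining types, when the seller uses s and the buyer uses b.\<close>
definition seller_val ::
  "real \<Rightarrow> seller_strategy \<Rightarrow> buyer_strategy \<Rightarrow> real measure \<Rightarrow> hist \<Rightarrow> real" where
  "seller_val \<delta> s b \<mu> h =
     (\<integral>\<theta>. (\<integral>\<omega>. disc_first \<delta> (\<lambda>k. b (hst s h \<omega> k) (s (hst s h \<omega> k) (\<omega> k)) \<theta>)
                     (\<lambda>k. snd (s (hst s h \<omega> k) (\<omega> k))) \<partial>rnd) \<partial>\<mu>)"

definition is_PBE ::
  "(real \<Rightarrow> real) \<Rightarrow> real \<Rightarrow> real \<Rightarrow> real \<Rightarrow> real \<Rightarrow> real \<Rightarrow> real measure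
     \<Rightarrow> seller_strategy \<Rightarrow> buyer_strategy \<Rightarrow> (hist \<Rightarrow> real measure) \<Rightarrow> bool" where
  "is_PBE v xl xh \<theta>l \<theta>' \<delta> prior s b \<mu> \<longleftrightarrow>
     seller_valid xl xh s
   \<and> (\<forall>h q. {\<theta>. b h q \<theta>} \<in> sets borel)
   \<and> (\<forall>h. prob_space (\<mu> h) \<and> sets (\<mu> h) = sets borel \<and> emeasure (\<mu> h) {\<theta>l..\<theta>'} = 1)
   \<and> \<mu> [] = prior
   \<and> (\<forall>h q. valid_hist xl xh h \<longrightarrow> valid_offer xl xh q \<longrightarrow>
          emeasure (\<mu> h) {\<theta>. \<not> b h q \<theta>} \<noteq> 0 \<longrightarrow>
          \<mu> (h @ [q]) = uniform_measure (\<mu> h) {\<theta>. \<not> b h q \<theta>})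
   \<and> (\<forall>h q \<theta> c. valid_hist xl xh h \<longrightarrow> valid_offer xl xh q \<longrightarrow> \<theta> \<in> {\<theta>l..\<theta>'} \<longrightarrow>
          buyer_val v \<delta> s c h q \<theta> \<le> buyer_val v \<delta> s (\<lambda>h' q'. b h' q' \<theta>) h q \<theta>)
   \<and> (\<forall>h s'. valid_hist xl xh h \<longrightarrow> seller_valid xl xh s' \<longrightarrow>
          seller_val \<delta> s' b (\<mu> h) h \<le> seller_val \<delta> s b (\<mu> h) h)"

end

theory Submission
  imports Defs
begin

locale setting =
  fixes v F f :: "real \<Rightarrow> real" and \<theta>l \<theta>h xl xh m M \<delta> \<theta>' :: real
  assumes types: "\<theta>l < \<theta>h"
    and ql: "0 < xl" and qh: "xl < xh"
    and conc: "strictly_concave_on {0..xh} v"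
    and C1: "C1_on_interval v 0 xh"
    and v0: "v 0 = 0"
    and f_meas: "set_borel_measurable borel {\<theta>l..\<theta>h} f"
    and F_cdf: "\<forall>\<theta>\<in>{\<theta>l..\<theta>h}. F \<theta> = integral {\<theta>l..\<theta>} f"
    and F_total: "F \<theta>h = 1"
    and m_pos: "0 < m" and f_bnd: "\<forall>\<theta>\<in>{\<theta>l..\<theta>h}. m \<le> f \<theta> \<and> f \<theta> \<le> M"
    and A3a: "0 < xe v xh \<theta>l" and A3b: "xe v xh \<theta>l \<le> xl"
    and A4: "\<forall>\<theta>\<in>{\<theta>l..\<theta>h}.
               0 \<le> v (xe v xh \<theta>) + (\<theta> - (1 - F \<theta>) / f \<theta>) * xe v xh \<theta>"
    and d0: "0 \<le> \<delta>" and d1: "\<delta> < 1"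
    and cutoff: "\<theta>' \<in> {\<theta>l..\<theta>h}"
begin

abbreviation X where "X \<theta> \<equiv> xe v xh \<theta>"
definition ub where "ub = ubar v xh \<theta>l"
definition vv where "vv z = v (max 0 (min xh z))"
definition UU where "UU x \<theta> = vv (min x (X \<theta>)) + \<theta> * min x (X \<theta>)"

lemma v_cont: "continuous_on {0..xh} v"
proof -
  from C1 obtain D where "\<forall>x\<in>{0..xh}. (v has_real_derivative D x) (at x within {0..xh})"
    unfolding C1_on_interval_def by blast
  then show ?thesis by (intro DERIV_continuous_on) auto
qed

lemma vv_cont: "continuous_on UNIV vv"
proof -
  have "continuous_on UNIV (\<lambda>z. max 0 (min xh z))" by (intro continuous_intros)
  moreover have "(\<lambda>z. max 0 (min xh z)) ` UNIV \<subseteq> {0..xh}" using ql qh by auto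
  ultimately show ?thesis unfolding vv_def
    using continuous_on_compose2[OF v_cont] by blast
qed

lemma vv_eq: "z \<in> {0..xh} \<Longrightarrow> vv z = v z"
  unfolding vv_def by auto

lemma max_ex: "\<exists>x\<in>{0..xh}. \<forall>y\<in>{0..xh}. v y + \<theta>*y \<le> v x + \<theta>*x"
proof -
  have "continuous_on {0..xh} (\<lambda>y. v y + \<theta>*y)"
    by (intro continuous_intros v_cont)
  then show ?thesis using continuous_attains_sup[of "{0..xh}" "\<lambda>y. v y + \<theta>*y"] ql qh by auto
qed

lemma strict:
  assumes "x\<in>{0..xh}" "y\<in>{0..xh}" "x\<noteq>y" "0<t" "t<1"
  shows "(1-t)*(v x + \<theta>*x) + t*(v y + \<theta>*y) < v((1-t)*x+t*y) + \<theta>*((1-t)*x+t*y)"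
proof -
  have "(1 - t) * v x + t * v y < v ((1 - t) * x + t * y)"
    using conc assms unfolding strictly_concave_on_def by blast
  then show ?thesis by (simp add: algebra_simps)
qed

lemma max_unique:
  assumes x: "x\<in>{0..xh}" "\<forall>z\<in>{0..xh}. v z + \<theta>*z \<le> v x + \<theta>*x"
    and y: "y\<in>{0..xh}" "\<forall>z\<in>{0..xh}. v z + \<theta>*z \<le> v y + \<theta>*y"
  shows "x = y"
proof (rule ccontr)
  assume "x \<noteq> y"
  define mm where "mm = (1-1/2)*x+(1/2)*y"
  define gx where "gx = v x + \<theta>*x"
  define gy where "gy = v y + \<theta>*y"
  define gm where "gm = v mm + \<theta>*mm"
  have s: "(1-1/2)*gx + (1/2)*gy < gm"
    using strict[OF x(1) y(1) \<open>x\<noteq>y\<close>, where t="1/2" and \<theta>=\<theta>] unfolding gx_def gy_def gm_def mm_def by simp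
  have "mm \<in> {0..xh}" using x y unfolding mm_def by auto
  then have "gm \<le> gx" using x unfolding gm_def gx_def by blast
  moreover have "gx \<le> gy" "gy \<le> gx" using x y unfolding gx_def gy_def by auto
  ultimately have "(1-1/2)*gx + (1/2)*gy = gx" by simp
  then show False using s \<open>gm \<le> gx\<close> by linarith
qed

lemma xe_props: "X \<theta> \<in> {0..xh} \<and> (\<forall>y\<in>{0..xh}. v y + \<theta>*y \<le> v (X \<theta>) + \<theta> * X \<theta>)"
proof -
  have "\<exists>!x. x \<in> {0..xh} \<and> (\<forall>y\<in>{0..xh}. v y + \<theta>*y \<le> v x + \<theta>*x)"
    using max_ex[of \<theta>] max_unique[of _ \<theta>] by blast
  then show ?thesis unfolding xe_def by (rule theI')
qed

lemma X_in: "X \<theta> \<in> {0..xh}" using xe_props by blast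
lemma X_max: "y\<in>{0..xh} \<Longrightarrow> v y + \<theta>*y \<le> v (X \<theta>) + \<theta> * X \<theta>" using xe_props by blast

lemma X_mono: assumes "\<theta>1 \<le> \<theta>2" shows "X \<theta>1 \<le> X \<theta>2"
proof (rule ccontr)
  assume c: "\<not> X \<theta>1 \<le> X \<theta>2"
  have a: "v (X \<theta>1) + \<theta>2*X \<theta>1 \<le> v (X \<theta>2) + \<theta>2 * X \<theta>2" using X_max X_in by blast
  have b: "v (X \<theta>2) + \<theta>1*X \<theta>2 \<le> v (X \<theta>1) + \<theta>1 * X \<theta>1" using X_max X_in by blast
  have "\<theta>1 \<noteq> \<theta>2"
  proof
    assume "\<theta>1 = \<theta>2" then show False using c by simp
  qed
  then have "(\<theta>2 - \<theta>1) * (X \<theta>1 - X \<theta>2) > 0" using assms c by simp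
  then show False using a b by (simp add: algebra_simps)
qed

lemma mono_below:
  assumes "0 \<le> y" "y \<le> z" "z \<le> X \<theta>"
  shows "v y + \<theta>*y \<le> v z + \<theta>*z"
proof (cases "y = z \<or> z = X \<theta>")
  case True
  then show ?thesis using X_max[of y \<theta>] X_in[of \<theta>] assms by auto
next
  case False
  then have yz: "y < z" "z < X \<theta>" using assms by auto
  define t where "t = (z - y) / (X \<theta> - y)"
  have t: "0 < t" "t < 1" using yz unfolding t_def by (auto simp: divide_simps)
  have tt: "t * (X \<theta> - y) = z - y" using yz unfolding t_def by simp
  have "(1-t)*y + t*X \<theta> = y + t * (X \<theta> - y)" by (simp add: algebra_simps)
  then have zt: "(1-t)*y + t*X \<theta> = z" using tt by simp
  have "(1-t)*(v y + \<theta>*y) + t*(v (X \<theta>) + \<theta>*X \<theta>) < v z + \<theta>*z"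
    using strict[of y "X \<theta>" t \<theta>] t zt yz assms X_in[of \<theta>] by auto
  moreover have "v y + \<theta>*y \<le> v (X \<theta>) + \<theta>*X \<theta>" using X_max[of y \<theta>] X_in[of \<theta>] assms by auto
  ultimately have "(1-t)*(v y + \<theta>*y) + t*(v y + \<theta>*y) < v z + \<theta>*z"
    using t by (smt (verit) mult_left_mono)
  then show ?thesis by (simp add: algebra_simps)
qed

lemma UU_val: assumes "0 \<le> x" "x \<le> xh"
  shows "min x (X \<theta>) \<in> {0..x}" "UU x \<theta> = v (min x (X \<theta>)) + \<theta> * min x (X \<theta>)"
  using X_in[of \<theta>] assms by (auto simp: UU_def vv_eq)

lemma UU_max: assumes "0 \<le> x" "x \<le> xh" "y \<in> {0..x}"
  shows "v y + \<theta>*y \<le> UU x \<theta>"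
proof (cases "X \<theta> \<le> x")
  case True
  then show ?thesis using UU_val[OF assms(1,2), of \<theta>] X_max[of y \<theta>] assms by auto
next
  case False
  then show ?thesis using UU_val[OF assms(1,2), of \<theta>] mono_below[of y x \<theta>] assms by auto
qed

lemma u_eq: assumes "0 \<le> x" "x \<le> xh" shows "u_fun v x \<theta> = UU x \<theta>"
  unfolding u_fun_def
proof (rule cSup_eq_maximum)
  show "UU x \<theta> \<in> (\<lambda>x'. v x' + \<theta> * x') ` {0..x}"
    using UU_val[OF assms, of \<theta>] by auto
  show "\<And>y. y \<in> (\<lambda>x'. v x' + \<theta> * x') ` {0..x} \<Longrightarrow> y \<le> UU x \<theta>"
    using UU_max[OF assms] by auto
qed

lemma UU_mono: assumes "0 \<le> x" "x \<le> xh" "\<theta>1 \<le> \<theta>2" shows "UU x \<theta>1 \<le> UU x \<theta>2"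
proof -
  let ?z = "min x (X \<theta>1)"
  have "UU x \<theta>1 = v ?z + \<theta>1 * ?z" "?z \<in> {0..x}" using UU_val[OF assms(1,2)] by auto
  moreover have "\<theta>1 * ?z \<le> \<theta>2 * ?z" using assms(3) \<open>?z \<in> {0..x}\<close> by (intro mult_right_mono) auto
  moreover have "v ?z + \<theta>2 * ?z \<le> UU x \<theta>2" using UU_max[OF assms(1,2)] \<open>?z \<in> {0..x}\<close> by blast
  ultimately show ?thesis by linarith
qed

lemma UU_le: assumes "0 \<le> x" "x \<le> xh" shows "UU x \<theta> \<le> UU xh \<theta>"
proof -
  let ?z = "min x (X \<theta>)"
  have "UU x \<theta> = v ?z + \<theta> * ?z" "?z \<in> {0..x}" using UU_val[OF assms(1,2)] by auto
  then show ?thesis using UU_max[of xh ?z \<theta>] assms by auto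
qed

lemma U_eq: "UU xh \<theta> = v (X \<theta>) + \<theta> * X \<theta>"
  using UU_val[of xh \<theta>] X_in[of \<theta>] ql qh by (auto simp: min_def)

lemma UU_low: assumes "xl \<le> x" "x \<le> xh" shows "UU x \<theta>l = ub"
proof -
  have "min x (X \<theta>l) = X \<theta>l" using assms A3b by auto
  then show ?thesis using UU_val[of x \<theta>l] assms ql unfolding ub_def ubar_def by auto
qed

lemma ub_pos: "0 < ub"
proof -
  have "v 0 + \<theta>l * 0 \<le> ub" using X_max[of 0 \<theta>l] ql qh unfolding ub_def ubar_def by auto
  moreover have "v 0 + \<theta>l * 0 \<noteq> ub"
  proof
    assume e: "v 0 + \<theta>l * 0 = ub"
    have "0 = X \<theta>l"
      apply (rule max_unique[of 0 \<theta>l])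
      using X_in[of \<theta>l] X_max[of _ \<theta>l] e ql qh unfolding ub_def ubar_def by auto
    then show False using A3a by simp
  qed
  ultimately show ?thesis using v0 by simp
qed

lemma UU_ge: assumes "xl \<le> x" "x \<le> xh" "\<theta>l \<le> \<theta>" shows "ub \<le> UU x \<theta>"
  using UU_mono[of x \<theta>l \<theta>] UU_low[of x] assms ql by auto

lemma U_conv: "UU xh b - UU xh a \<le> (b - a) * X b"
proof -
  have "v (X b) + a * X b \<le> UU xh a" using UU_max[of xh "X b" a] X_in[of b] ql qh by auto
  then show ?thesis using U_eq[of b] by (simp add: algebra_simps)
qed

lemma U_lip: assumes "a \<le> b" shows "UU xh b - UU xh a \<le> xh * (b - a)"
proof -
  have "(b - a) * X b \<le> (b - a) * xh" using X_in[of b] assms by (intro mult_left_mono) auto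
  then show ?thesis using U_conv[of b a] by (simp add: algebra_simps)
qed

lemma U_cont: "continuous_on UNIV (UU xh)"
proof -
  have "\<bar>UU xh b - UU xh a\<bar> \<le> xh * \<bar>b - a\<bar>" for a b
  proof (cases "a \<le> b")
    case True
    then show ?thesis using U_lip[of a b] UU_mono[of xh a b] ql qh by (auto simp: abs_if)
  next
    case False
    then show ?thesis using U_lip[of b a] UU_mono[of xh b a] ql qh by (auto simp: abs_if)
  qed
  then have "lipschitz_on xh UNIV (UU xh)"
    using ql qh by (intro lipschitz_onI) (auto simp: dist_real_def)
  then show ?thesis by (rule lipschitz_on_continuous_on)
qed

end

context setting begin

lemma f_pos: "\<theta> \<in> {\<theta>l..\<theta>h} \<Longrightarrow> 0 < f \<theta>"
  using f_bnd m_pos by force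

lemma borel_lborel: "measurable lborel N = measurable borel N"
  by (rule measurable_cong_sets) simp_all

lemma f_lborel_int: "integrable lborel (\<lambda>x. indicator {\<theta>l..\<theta>h} x *\<^sub>R f x)"
proof -
  have i1: "integrable lborel (\<lambda>x. M * indicator {\<theta>l..\<theta>h} x :: real)"
    using types by (intro integrable_mult_right integrable_real_indicator) auto
  have m1: "(\<lambda>x. indicator {\<theta>l..\<theta>h} x *\<^sub>R f x) \<in> borel_measurable lborel"
    using f_meas unfolding set_borel_measurable_def borel_lborel .
  have ae: "AE x in lborel. norm (indicator {\<theta>l..\<theta>h} x *\<^sub>R f x) \<le> norm (M * indicator {\<theta>l..\<theta>h} x :: real)"
  proof (intro AE_I2)
    fix x show "norm (indicator {\<theta>l..\<theta>h} x *\<^sub>R f x) \<le> norm (M * indicator {\<theta>l..\<theta>h} x :: real)"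
    proof (cases "x \<in> {\<theta>l..\<theta>h}")
      case True
      then have "0 < f x" "f x \<le> M" using f_bnd f_pos by auto
      then show ?thesis using True by auto
    qed auto
  qed
  show ?thesis by (rule Bochner_Integration.integrable_bound[OF i1 m1 ae])
qed

lemma f_int: "f integrable_on {\<theta>l..\<theta>h}"
proof -
  have "(\<lambda>x. indicator {\<theta>l..\<theta>h} x *\<^sub>R f x) integrable_on UNIV"
    using integrable_on_lborel[OF f_lborel_int] .
  moreover have "(\<lambda>x. indicator {\<theta>l..\<theta>h} x *\<^sub>R f x) = (\<lambda>x. if x \<in> {\<theta>l..\<theta>h} then f x else 0)"
    by (auto simp: indicator_def)
  ultimately show ?thesis using integrable_restrict_UNIV by metis
qed

lemma f_int_sub: "\<theta>l \<le> a \<Longrightarrow> b \<le> \<theta>h \<Longrightarrow> f integrable_on {a..b}"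
  using integrable_on_subinterval[OF f_int] by auto

lemma F_diff: assumes "\<theta>l \<le> a" "a \<le> b" "b \<le> \<theta>h" shows "F b - F a = integral {a..b} f"
proof -
  have "integral {\<theta>l..a} f + integral {a..b} f = integral {\<theta>l..b} f"
    using Henstock_Kurzweil_Integration.integral_combine[where a=\<theta>l and c=a and b=b and f=f] f_int_sub[of \<theta>l b] assms by auto
  moreover have "F a = integral {\<theta>l..a} f" "F b = integral {\<theta>l..b} f" using F_cdf assms by auto
  ultimately show ?thesis by simp
qed

lemma F_lb: assumes "\<theta>l \<le> a" "a \<le> b" "b \<le> \<theta>h" "\<And>\<theta>. \<theta> \<in> {a..b} \<Longrightarrow> c \<le> f \<theta>"
  shows "c * (b - a) \<le> F b - F a"
proof -
  have "integral {a..b} (\<lambda>_. c) \<le> integral {a..b} f"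
    using assms by (intro integral_le f_int_sub) auto
  then show ?thesis using F_diff[OF assms(1-3)] assms by (simp add: algebra_simps)
qed

lemma F_mono: "\<theta>l \<le> a \<Longrightarrow> a \<le> b \<Longrightarrow> b \<le> \<theta>h \<Longrightarrow> F a \<le> F b"
proof -
  assume a: "\<theta>l \<le> a" "a \<le> b" "b \<le> \<theta>h"
  have "\<And>\<theta>. \<theta> \<in> {a..b} \<Longrightarrow> 0 \<le> f \<theta>" using f_pos a by (meson atLeastAtMost_iff less_imp_le order_trans)
  then show ?thesis using F_lb[of a b 0] a by auto
qed

lemma F_low: "F \<theta>l = 0" using F_cdf types by auto

lemma F_le1: "\<theta>l \<le> a \<Longrightarrow> a \<le> \<theta>h \<Longrightarrow> F a \<le> 1"
  using F_mono[of a \<theta>h] F_total by auto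

lemma F_ge0: "\<theta>l \<le> a \<Longrightarrow> a \<le> \<theta>h \<Longrightarrow> 0 \<le> F a"
  using F_mono[of \<theta>l a] F_low by auto

lemma U_ge: "\<theta>l \<le> \<theta> \<Longrightarrow> ub \<le> UU xh \<theta>" using UU_ge[of xh \<theta>] qh by auto

lemma A4': assumes "\<theta> \<in> {\<theta>l..\<theta>h}" shows "(1 - F \<theta>) * X \<theta> \<le> UU xh \<theta> * f \<theta>"
proof -
  have fp: "0 < f \<theta>" using f_pos assms by auto
  have "0 \<le> v (X \<theta>) + (\<theta> - (1 - F \<theta>) / f \<theta>) * X \<theta>" using A4 assms by blast
  then have "(1 - F \<theta>) / f \<theta> * X \<theta> \<le> UU xh \<theta>" using U_eq[of \<theta>] by (simp add: algebra_simps)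
  then have "(1 - F \<theta>) * X \<theta> / f \<theta> \<le> UU xh \<theta>" by simp
  then show ?thesis using fp by (simp add: divide_simps)
qed

definition K where "K = xh * xh / ub"

lemma step:
  assumes ab: "\<theta>l \<le> a" "a \<le> b" "b \<le> s" and s: "s \<le> \<theta>h"
  shows "UU xh b * (F s - F b) - UU xh a * (F s - F a) \<le> (b - a) * (X b - X a) + (b - a)^2 * K"
proof -
  define U where "U = UU xh"
  define \<Delta> where "\<Delta> = b - a"
  define Gb where "Gb = F s - F b"
  have D0: "0 \<le> \<Delta>" using ab unfolding \<Delta>_def by auto
  have Gb0: "0 \<le> Gb" using F_mono[of b s] ab s unfolding Gb_def by auto
  have Gb1: "Gb \<le> 1" using F_le1[of s] F_ge0[of b] ab s unfolding Gb_def by auto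
  have Ua: "ub \<le> U a" "ub \<le> U b" using U_ge ab unfolding U_def by auto
  have ubp: "0 < ub" by (rule ub_pos)
  have Xa: "0 \<le> X a" "X a \<le> xh" using X_in[of a] by auto
  have Xab: "X a \<le> X b" using X_mono ab by auto
  have eq: "U b * Gb - U a * (F s - F a) = (U b - U a) * Gb - U a * (F b - F a)"
    unfolding Gb_def by (simp add: algebra_simps)
  have e1: "(U b - U a) * Gb \<le> \<Delta> * X b * Gb"
    using U_conv[of b a] Gb0 unfolding U_def \<Delta>_def by (intro mult_right_mono) auto
  define r where "r = X a * Gb / U b"
  have r0: "0 \<le> r" unfolding r_def using Xa Gb0 Ua ubp by auto
  have fr: "r \<le> f \<theta>" if th: "\<theta> \<in> {a..b}" for \<theta>
  proof -
    have thr: "\<theta> \<in> {\<theta>l..\<theta>h}" using th ab s by auto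
    have "X a * Gb \<le> X \<theta> * (1 - F \<theta>)"
    proof (rule mult_mono)
      show "X a \<le> X \<theta>" using X_mono th by auto
      show "Gb \<le> 1 - F \<theta>" unfolding Gb_def using F_le1[of s] F_mono[of \<theta> b] th ab s by auto
      show "0 \<le> X \<theta>" using X_in[of \<theta>] by auto
      show "0 \<le> Gb" by (rule Gb0)
    qed
    also have "\<dots> \<le> U \<theta> * f \<theta>" using A4'[OF thr] unfolding U_def by (simp add: mult.commute)
    also have "\<dots> \<le> U b * f \<theta>"
      using UU_mono[of xh \<theta> b] th f_pos[OF thr] ql qh unfolding U_def by (intro mult_right_mono) auto
    finally have "X a * Gb \<le> U b * f \<theta>" .
    then show ?thesis unfolding r_def using Ua ubp by (simp add: divide_simps mult.commute)
  qed
  have e2: "r * \<Delta> \<le> F b - F a" unfolding \<Delta>_def using ab s fr by (intro F_lb) auto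
  have e3: "U a * (r * \<Delta>) \<le> U a * (F b - F a)" using e2 Ua ubp by (intro mult_left_mono) auto
  have e4: "U b * Gb - U a * (F s - F a) \<le> \<Delta> * Gb * (X b - X a * U a / U b)"
  proof -
    have "U a * (r * \<Delta>) = \<Delta> * Gb * (X a * U a / U b)" unfolding r_def by (simp add: algebra_simps)
    then show ?thesis using eq e1 e3 by (simp add: algebra_simps)
  qed
  have e5: "X b - X a * U a / U b \<le> (X b - X a) + xh * xh * \<Delta> / ub"
  proof -
    have "X b - X a * U a / U b = (X b - X a) + X a * (U b - U a) / U b"
      using Ua ubp by (simp add: field_simps)
    moreover have "X a * (U b - U a) / U b \<le> xh * (xh * \<Delta>) / ub"
    proof -
      have "U b - U a \<le> xh * \<Delta>" using U_lip[of a b] ab unfolding U_def \<Delta>_def by auto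
      moreover have "0 \<le> U b - U a" using UU_mono[of xh a b] ab ql qh unfolding U_def by auto
      ultimately have "X a * (U b - U a) \<le> xh * (xh * \<Delta>)" using Xa by (intro mult_mono) auto
      moreover have "0 \<le> xh * (xh * \<Delta>)" using D0 ql qh by auto
      ultimately show ?thesis using Ua ubp
        by (meson frac_le less_le_trans mult_nonneg_nonneg Xa(1) \<open>0 \<le> U b - U a\<close>)
    qed
    ultimately show ?thesis by (simp add: algebra_simps)
  qed
  define Z where "Z = (X b - X a) + xh * xh * \<Delta> / ub"
  have Z0: "0 \<le> Z" unfolding Z_def using Xab D0 ubp by auto
  have "\<Delta> * Gb * (X b - X a * U a / U b) \<le> \<Delta> * Gb * Z"
    using e5 D0 Gb0 unfolding Z_def by (intro mult_left_mono) auto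
  also have "\<dots> \<le> \<Delta> * Z" using Gb1 D0 Z0
    by (metis mult.right_neutral mult_left_mono mult_nonneg_nonneg mult.assoc mult.commute)
  also have "\<dots> = (b - a) * (X b - X a) + (b - a)^2 * K"
    unfolding Z_def \<Delta>_def K_def using ubp by (simp add: field_simps power2_eq_square)
  finally show ?thesis using e4 unfolding U_def Gb_def by linarith
qed

lemma static:
  assumes "\<theta>l \<le> t" "t \<le> s" "s \<le> \<theta>h"
  shows "UU xh t * (F s - F t) \<le> ub * F s"
proof -
  define \<phi> where "\<phi> \<tau> = UU xh \<tau> * (F s - F \<tau>)" for \<tau>
  define C where "C = (t - \<theta>l) * xh + (t - \<theta>l)^2 * K"
  have K0: "0 \<le> K" unfolding K_def using ub_pos by auto
  have C0: "0 \<le> C" unfolding C_def using assms K0 ql qh by auto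
  have bound: "\<phi> t - \<phi> \<theta>l \<le> C / real n" if n: "n \<ge> 1" for n :: nat
  proof -
    define \<Delta> where "\<Delta> = (t - \<theta>l) / real n"
    define p where "p i = \<theta>l + real i * \<Delta>" for i :: nat
    have D0: "0 \<le> \<Delta>" unfolding \<Delta>_def using assms by auto
    have pn: "p n = t" "p 0 = \<theta>l" unfolding p_def \<Delta>_def using n by auto
    have pin: "\<theta>l \<le> p i \<and> p i \<le> t" if "i \<le> n" for i
    proof -
      have "real i * \<Delta> \<le> real n * \<Delta>" using that D0 by (intro mult_right_mono) auto
      then show ?thesis unfolding p_def using D0 pn(1) unfolding p_def by auto
    qed
    have ps: "p (Suc i) - p i = \<Delta>" for i unfolding p_def by (simp add: algebra_simps)
    have "\<phi> t - \<phi> \<theta>l = (\<Sum>i<n. \<phi> (p (Suc i)) - \<phi> (p i))"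
      by (subst sum_lessThan_telescope) (simp add: pn)
    also have "\<dots> \<le> (\<Sum>i<n. \<Delta> * (X (p (Suc i)) - X (p i)) + \<Delta>^2 * K)"
    proof (rule sum_mono)
      fix i assume "i \<in> {..<n}"
      then have "\<theta>l \<le> p i" "p i \<le> p (Suc i)" "p (Suc i) \<le> s"
        using pin[of i] pin[of "Suc i"] ps[of i] D0 assms by auto
      then show "\<phi> (p (Suc i)) - \<phi> (p i) \<le> \<Delta> * (X (p (Suc i)) - X (p i)) + \<Delta>^2 * K"
        using step[of "p i" "p (Suc i)" s] assms ps[of i] unfolding \<phi>_def by auto
    qed
    also have "\<dots> = \<Delta> * (\<Sum>i<n. X (p (Suc i)) - X (p i)) + real n * \<Delta>^2 * K"
      by (simp add: sum.distrib sum_distrib_left)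
    also have "(\<Sum>i<n. X (p (Suc i)) - X (p i)) = X t - X \<theta>l"
      by (subst sum_lessThan_telescope) (simp add: pn)
    also have "\<Delta> * (X t - X \<theta>l) + real n * \<Delta>^2 * K \<le> C / real n"
    proof -
      have "X t - X \<theta>l \<le> xh" using X_in[of t] X_in[of \<theta>l] by auto
      then have "\<Delta> * (X t - X \<theta>l) \<le> \<Delta> * xh" using D0 by (intro mult_left_mono) auto
      moreover have "real n * \<Delta>^2 * K = (t - \<theta>l)^2 * K / real n"
        unfolding \<Delta>_def using n by (simp add: power2_eq_square field_simps)
      moreover have "\<Delta> * xh = (t - \<theta>l) * xh / real n" unfolding \<Delta>_def by simp
      ultimately show ?thesis unfolding C_def by (simp add: add_divide_distrib)
    qed
    finally show ?thesis .
  qed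
  have "\<phi> t - \<phi> \<theta>l \<le> 0"
  proof (rule ccontr)
    assume "\<not> ?thesis"
    then have d: "0 < \<phi> t - \<phi> \<theta>l" by simp
    obtain n :: nat where n: "C / (\<phi> t - \<phi> \<theta>l) < real n" using reals_Archimedean2 by blast
    have "0 \<le> C / (\<phi> t - \<phi> \<theta>l)" using C0 d by simp
    then have n1: "n \<ge> 1" using n by (cases n) auto
    have "C < real n * (\<phi> t - \<phi> \<theta>l)" using n d by (simp add: divide_simps mult.commute)
    then have "C / real n < \<phi> t - \<phi> \<theta>l" using n1 by (simp add: divide_simps mult.commute)
    then show False using bound[OF n1] by simp
  qed
  moreover have "\<phi> \<theta>l = ub * F s" unfolding \<phi>_def using UU_low[of xh] qh F_low by simp
  ultimately show ?thesis unfolding \<phi>_def by simp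
qed

end

context setting begin

definition T where "T = type_dist \<theta>l \<theta>h f"
definition prior where "prior = cond_type_dist \<theta>l \<theta>h f \<theta>'"
definition dcw :: "real set \<Rightarrow> bool" where
  "dcw L \<longleftrightarrow> (\<forall>x\<in>L \<inter> {\<theta>l..\<theta>'}. \<forall>y\<in>{\<theta>l..x}. y \<in> L)"
definition Q :: "real measure \<Rightarrow> bool" where
  "Q \<nu> \<longleftrightarrow> (\<forall>L \<in> sets borel. dcw L \<longrightarrow>
      (\<forall>c>0. c * measure \<nu> (L \<inter> {\<theta>. c \<le> UU xh \<theta>}) \<le> ub * measure \<nu> L))"
definition good :: "real measure \<Rightarrow> bool" where
  "good \<nu> \<longleftrightarrow> prob_space \<nu> \<and> sets \<nu> = sets borel \<and> emeasure \<nu> {\<theta>l..\<theta>'} = 1 \<and> Q \<nu>"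

abbreviation S where "S \<equiv> {\<theta>l..\<theta>h}"
abbreviation gT where "gT \<equiv> (\<lambda>\<theta>. ennreal (indicator S \<theta> * f \<theta>))"

lemma sets_T[simp]: "sets T = sets borel"
  unfolding T_def type_dist_def by simp

lemma g_meas[measurable]: "gT \<in> borel_measurable lborel"
proof -
  have "(\<lambda>x. indicator S x *\<^sub>R f x) \<in> borel_measurable lborel"
    using f_meas unfolding set_borel_measurable_def borel_lborel .
  then show ?thesis by simp
qed

lemma T_emeasure: "A \<in> sets borel \<Longrightarrow> emeasure T A = (\<integral>\<^sup>+ x. gT x * indicator A x \<partial>lborel)"
  unfolding T_def type_dist_def by (rule emeasure_density) auto

lemma T_Icc: assumes "\<theta>l \<le> a" "a \<le> b" "b \<le> \<theta>h"
  shows "emeasure T {a..b} = ennreal (F b - F a)"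
proof -
  have "emeasure T {a..b} = (\<integral>\<^sup>+ x. ennreal (f x) * indicator {a..b} x \<partial>lborel)"
    unfolding T_emeasure[of "{a..b}", simplified]
    by (intro nn_integral_cong) (use assms in \<open>auto simp: indicator_def\<close>)
  also have "\<dots> = ennreal (F b - F a)"
  proof (rule nn_integral_has_integral_lebesgue')
    show "\<And>x. x \<in> {a..b} \<Longrightarrow> 0 \<le> f x" using f_pos assms by (meson atLeastAtMost_iff less_imp_le order_trans)
    show "(f has_integral F b - F a) {a..b}"
      using F_diff[OF assms] f_int_sub[of a b] assms by (simp add: integrable_integral)
  qed
  finally show ?thesis .
qed

lemma T_pt: "emeasure T {a} = 0"
  unfolding T_emeasure[of "{a}", simplified] by simp

lemma T_UNIV: "emeasure T UNIV = 1"
proof -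
  have "emeasure T UNIV = (\<integral>\<^sup>+ x. gT x \<partial>lborel)"
    using T_emeasure[of UNIV] by simp
  also have "\<dots> = (\<integral>\<^sup>+ x. gT x * indicator S x \<partial>lborel)"
    by (intro nn_integral_cong) (auto simp: indicator_def)
  also have "\<dots> = emeasure T S" using T_emeasure[of S] by simp
  also have "\<dots> = 1" using T_Icc[of \<theta>l \<theta>h] types F_total F_low by simp
  finally show ?thesis .
qed

lemma T_prob: "prob_space T"
proof
  show "emeasure T (space T) = 1" using T_UNIV by (simp add: T_def type_dist_def)
qed

lemma T_measure_Icc: assumes "\<theta>l \<le> a" "a \<le> b" "b \<le> \<theta>h"
  shows "measure T {a..b} = F b - F a"
  using T_Icc[OF assms] F_mono[OF assms] unfolding measure_def by simp

lemma T_measure_Ico: assumes "\<theta>l \<le> a" "a \<le> b" "b \<le> \<theta>h"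
  shows "measure T {a..<b} = F b - F a"
proof -
  interpret T: prob_space T by (rule T_prob)
  have "{a..<b} = {a..b} - {b}" by auto
  then have "measure T {a..<b} = measure T {a..b} - measure T {b}"
    using assms by (simp add: T.finite_measure_Diff)
  moreover have "measure T {b} = 0" using T_pt[of b] unfolding measure_def by simp
  ultimately show ?thesis using T_measure_Icc[OF assms] by simp
qed

lemma core_T:
  assumes L: "L \<in> sets borel" "L \<subseteq> {\<theta>l..\<theta>'}" "\<forall>x\<in>L. \<forall>y\<in>{\<theta>l..x}. y \<in> L" and c: "c > 0"
  shows "c * measure T (L \<inter> {\<theta>. c \<le> UU xh \<theta>}) \<le> ub * measure T L"
proof -
  interpret T: prob_space T by (rule T_prob)
  define Uc where "Uc = {\<theta>. c \<le> UU xh \<theta>}"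
  have Uc_closed: "closed Uc" unfolding Uc_def
    by (rule closed_Collect_le) (auto intro: U_cont continuous_intros)
  have Uc_sets: "Uc \<in> sets borel" using Uc_closed by (simp add: borel_closed)
  define S0 where "S0 = L \<inter> Uc"
  have S0_sets: "S0 \<in> sets borel" using L Uc_sets unfolding S0_def by auto
  have mono1: "measure T S0 \<le> measure T L" unfolding S0_def using L by (intro T.finite_measure_mono) auto
  have ubp: "0 < ub" by (rule ub_pos)
  show ?thesis
  proof (cases "c \<le> ub \<or> S0 = {}")
    case True
    then show ?thesis
    proof
      assume "c \<le> ub"
      then show ?thesis using mono1 c unfolding S0_def Uc_def
        by (meson less_imp_le measure_nonneg mult_mono order_trans)
    next
      assume "S0 = {}"
      then show ?thesis using ubp unfolding S0_def Uc_def by simp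
    qed
  next
    case False
    then have cub: "ub < c" and ne: "S0 \<noteq> {}" by auto
    have Lne: "L \<noteq> {}" using ne unfolding S0_def by auto
    have bdd: "bdd_below S0" "bdd_above L" using L unfolding S0_def
      by (auto intro!: bdd_belowI[of _ \<theta>l] bdd_aboveI[of _ \<theta>'])
    define t where "t = Inf S0"
    define s where "s = Sup L"
    have "t \<in> closure S0" unfolding t_def using closure_contains_Inf[OF ne bdd(1)] .
    moreover have "closure S0 \<subseteq> Uc" unfolding S0_def using Uc_closed
      by (meson closure_minimal inf_le2)
    ultimately have ct: "c \<le> UU xh t" unfolding Uc_def by auto
    have t1: "\<theta>l \<le> t" unfolding t_def using ne L unfolding S0_def by (intro cInf_greatest) auto
    obtain z where z: "z \<in> S0" using ne by auto
    have ts: "t \<le> s" unfolding t_def s_def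
      using cInf_lower[OF z bdd(1)] cSup_upper[of z L] z bdd(2) unfolding S0_def by auto
    have s1: "s \<le> \<theta>'" unfolding s_def using Lne L by (intro cSup_least) auto
    have sh: "s \<le> \<theta>h" using s1 cutoff by auto
    have sub1: "S0 \<subseteq> {t..s}" unfolding t_def s_def S0_def
      using cInf_lower[OF _ bdd(1)] cSup_upper[OF _ bdd(2)] unfolding S0_def by auto
    have sub2: "{\<theta>l..<s} \<subseteq> L"
    proof
      fix y assume y: "y \<in> {\<theta>l..<s}"
      then obtain x where "x \<in> L" "y < x" using less_cSup_iff[OF Lne bdd(2)] unfolding s_def by auto
      then show "y \<in> L" using L(3) y by auto
    qed
    have m1: "measure T S0 \<le> F s - F t"
      using T.finite_measure_mono[OF sub1] T_measure_Icc[OF t1 ts sh] by simp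
    have m2: "F s \<le> measure T L"
      using T.finite_measure_mono[OF sub2] L T_measure_Ico[of \<theta>l s] t1 ts sh F_low by simp
    have Fst: "0 \<le> F s - F t" using F_mono[OF t1 ts sh] by simp
    have "c * measure T S0 \<le> c * (F s - F t)" using m1 c by simp
    also have "\<dots> \<le> UU xh t * (F s - F t)" using ct Fst by (intro mult_right_mono) auto
    also have "\<dots> \<le> ub * F s" using static[OF t1 ts sh] .
    also have "\<dots> \<le> ub * measure T L" using m2 ubp by simp
    finally show ?thesis unfolding S0_def Uc_def .
  qed
qed

lemma Uc_sets[measurable]: "{\<theta>. c \<le> UU xh \<theta>} \<in> sets borel"
proof -
  have "closed {\<theta>. c \<le> UU xh \<theta>}"
    by (rule closed_Collect_le) (auto intro: U_cont continuous_intros)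
  then show ?thesis by (simp add: borel_closed)
qed

lemma good_prior: "good prior"
proof (cases "\<theta>' = \<theta>l")
  case True
  then have pr: "prior = return borel \<theta>l" unfolding prior_def cond_type_dist_def by simp
  have Qp: "Q prior"
    unfolding Q_def
  proof (intro ballI impI allI)
    fix L c assume L: "L \<in> sets borel" "dcw L" and c: "(c::real) > 0"
    have "L \<inter> {\<theta>. c \<le> UU xh \<theta>} \<in> sets borel" using L by auto
    then show "c * measure prior (L \<inter> {\<theta>. c \<le> UU xh \<theta>}) \<le> ub * measure prior L"
      using L ub_pos UU_low[of xh] qh unfolding pr
      by (auto simp: measure_return indicator_def)
  qed
  have "emeasure prior {\<theta>l..\<theta>'} = 1" unfolding pr using True by (subst emeasure_return) auto
  moreover have "prob_space prior" unfolding pr by (rule prob_space_return) simp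
  moreover have "sets prior = sets borel" unfolding pr by simp
  ultimately show ?thesis unfolding good_def using Qp by blast
next
  case False
  let ?B = "{\<theta>l..\<theta>'}"
  interpret T: prob_space T by (rule T_prob)
  have tl: "\<theta>l < \<theta>'" using False cutoff by auto
  have pr: "prior = uniform_measure T ?B" unfolding prior_def cond_type_dist_def T_def using False by simp
  have FB: "m * (\<theta>' - \<theta>l) \<le> F \<theta>' - F \<theta>l" using cutoff f_bnd by (intro F_lb) auto
  have mB: "measure T ?B > 0"
  proof -
    have "0 < m * (\<theta>' - \<theta>l)" using m_pos tl by simp
    then show ?thesis using T_measure_Icc[of \<theta>l \<theta>'] cutoff FB by simp
  qed
  have eB: "emeasure T ?B \<noteq> 0" "emeasure T ?B \<noteq> \<infinity>" using mB T.emeasure_eq_measure by auto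
  have Qp: "Q prior"
    unfolding Q_def
  proof (intro ballI impI allI)
    fix L c assume L: "L \<in> sets borel" "dcw L" and c: "(c::real) > 0"
    have L'1: "?B \<inter> L \<in> sets borel" "?B \<inter> L \<subseteq> ?B" using L by auto
    have L'2: "\<forall>x\<in>?B \<inter> L. \<forall>y\<in>{\<theta>l..x}. y \<in> ?B \<inter> L" using L(2) unfolding dcw_def by auto
    have "c * measure T ((?B \<inter> L) \<inter> {\<theta>. c \<le> UU xh \<theta>}) \<le> ub * measure T (?B \<inter> L)"
      using core_T[OF L'1 L'2 c] .
    then have "c * measure T (?B \<inter> (L \<inter> {\<theta>. c \<le> UU xh \<theta>})) / measure T ?B \<le> ub * measure T (?B \<inter> L) / measure T ?B"
      using mB by (simp add: Int_assoc divide_right_mono)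
    then show "c * measure prior (L \<inter> {\<theta>. c \<le> UU xh \<theta>}) \<le> ub * measure prior L"
      unfolding pr using eB L by (simp add: measure_uniform_measure)
  qed
  have "emeasure prior ?B = 1" unfolding pr by (rule emeasure_uniform_measure_1[OF eB])
  moreover have "prob_space prior" unfolding pr by (rule prob_space_uniform_measure[OF eB])
  moreover have "sets prior = sets borel" unfolding pr by simp
  ultimately show ?thesis unfolding good_def using Qp by blast
qed

lemma good_cond:
  assumes gd: "good \<nu>" and A: "A \<in> sets borel" "dcw A" "emeasure \<nu> A \<noteq> 0"
  shows "good (uniform_measure \<nu> A)"
proof -
  let ?B = "{\<theta>l..\<theta>'}"
  interpret N: prob_space \<nu> using gd unfolding good_def by auto
  have sN: "sets \<nu> = sets borel" using gd unfolding good_def by auto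
  have AN: "A \<in> sets \<nu>" using A sN by auto
  have eA: "emeasure \<nu> A \<noteq> \<infinity>" by simp
  have mA: "measure \<nu> A > 0" using A(3) N.emeasure_eq_measure
    by (metis ennreal_0 measure_nonneg order_le_less)
  have Qn: "Q \<nu>" using gd unfolding good_def by auto
  have Qu: "Q (uniform_measure \<nu> A)"
    unfolding Q_def
  proof (intro ballI impI allI)
    fix L c assume L: "L \<in> sets borel" "dcw L" and c: "(c::real) > 0"
    have "A \<inter> L \<in> sets borel" "dcw (A \<inter> L)" using L A unfolding dcw_def by auto
    then have "c * measure \<nu> ((A \<inter> L) \<inter> {\<theta>. c \<le> UU xh \<theta>}) \<le> ub * measure \<nu> (A \<inter> L)"
      using Qn c unfolding Q_def by blast
    then have "c * measure \<nu> (A \<inter> (L \<inter> {\<theta>. c \<le> UU xh \<theta>})) / measure \<nu> A \<le> ub * measure \<nu> (A \<inter> L) / measure \<nu> A"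
      using mA by (simp add: Int_assoc divide_right_mono)
    then show "c * measure (uniform_measure \<nu> A) (L \<inter> {\<theta>. c \<le> UU xh \<theta>}) \<le> ub * measure (uniform_measure \<nu> A) L"
      using A(3) eA L sN by (simp add: measure_uniform_measure)
  qed
  have "AE x in \<nu>. x \<in> ?B"
    using gd N.AE_in_set_eq_1[of ?B] sN unfolding good_def by (simp add: N.emeasure_eq_measure)
  then have "emeasure \<nu> (A \<inter> ?B) = emeasure \<nu> A"
    using AN sN by (intro emeasure_eq_AE) auto
  then have "emeasure (uniform_measure \<nu> A) ?B = 1"
    using AN sN A(3) eA by (simp add: emeasure_uniform_measure divide_eq_1_ennreal ennreal_divide_self)
  then show ?thesis unfolding good_def using Qu A(3) eA sN
    by (auto simp: prob_space_uniform_measure)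
qed

end

context setting begin

definition bb :: "offer \<Rightarrow> real \<Rightarrow> bool" where
  "bb q \<theta> \<longleftrightarrow> \<theta> \<in> {\<theta>l..\<theta>'} \<and> (fst q \<in> {xl..xh} \<longrightarrow> snd q - \<delta> * ub \<le> (1 - \<delta>) * UU (fst q) \<theta>)"
definition bS :: buyer_strategy where "bS h q \<theta> = bb q \<theta>"
definition sx :: "hist \<Rightarrow> real" where
  "sx h = (if h = [] then xh else if fst (last h) \<in> {xl..xh} then fst (last h) else xh)"
definition sS :: seller_strategy where "sS h r = (sx h, ub)"
definition upd :: "real measure \<Rightarrow> offer \<Rightarrow> real measure" where
  "upd \<nu> q = (if emeasure \<nu> {\<theta>. \<not> bb q \<theta>} \<noteq> 0 then uniform_measure \<nu> {\<theta>. \<not> bb q \<theta>} else \<nu>)"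
definition mu :: "hist \<Rightarrow> real measure" where "mu h = foldl upd prior h"

lemma X_meas[measurable]: "X \<in> borel_measurable borel"
  by (rule borel_measurable_mono) (auto simp: mono_def X_mono)

lemma vv_meas[measurable]: "vv \<in> borel_measurable borel"
  by (rule borel_measurable_continuous_onI) (rule vv_cont)

lemma sx_in: "sx h \<in> {xl..xh}" unfolding sx_def using ql qh by auto

lemma UU_meas1[measurable]: "(\<lambda>\<theta>. UU x \<theta>) \<in> borel_measurable borel"
  unfolding UU_def by measurable

lemma bb_sets[measurable]: "{\<theta>. bb q \<theta>} \<in> sets borel"
proof -
  have h: "(\<lambda>\<theta>. (1 - \<delta>) * UU (fst q) \<theta>) \<in> borel_measurable borel" by measurable
  have s1: "{\<theta>. snd q - \<delta> * ub \<le> (1 - \<delta>) * UU (fst q) \<theta>} \<in> sets borel"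
    using h unfolding borel_measurable_iff_ge by auto
  have "{\<theta>. bb q \<theta>} = (if fst q \<in> {xl..xh} then {\<theta>l..\<theta>'} \<inter> {\<theta>. snd q - \<delta> * ub \<le> (1 - \<delta>) * UU (fst q) \<theta>} else {\<theta>l..\<theta>'})"
    unfolding bb_def by auto
  then show ?thesis using s1 by auto
qed

lemma nbb_sets[measurable]: "{\<theta>. \<not> bb q \<theta>} \<in> sets borel"
proof -
  have "{\<theta>. \<not> bb q \<theta>} = UNIV - {\<theta>. bb q \<theta>}" by auto
  then show ?thesis using bb_sets[of q] by (metis sets.compl_sets space_borel)
qed

lemma nbb_dcw: "dcw {\<theta>. \<not> bb q \<theta>}"
  unfolding dcw_def
proof (intro ballI)
  fix x y assume x: "x \<in> {\<theta>. \<not> bb q \<theta>} \<inter> {\<theta>l..\<theta>'}" and y: "y \<in> {\<theta>l..x}"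
  then have xb: "fst q \<in> {xl..xh}" "snd q - \<delta> * ub > (1 - \<delta>) * UU (fst q) x"
    unfolding bb_def by auto
  have "UU (fst q) y \<le> UU (fst q) x" using UU_mono[of "fst q" y x] xb ql y by auto
  then have "(1 - \<delta>) * UU (fst q) y \<le> (1 - \<delta>) * UU (fst q) x" using d1 by (intro mult_left_mono) auto
  then show "y \<in> {\<theta>. \<not> bb q \<theta>}" using xb unfolding bb_def by auto
qed

lemma good_upd: "good \<nu> \<Longrightarrow> good (upd \<nu> q)"
  unfolding upd_def using good_cond[OF _ nbb_sets nbb_dcw] by auto

lemma good_mu: "good (mu h)"
proof (induction h rule: rev_induct)
  case Nil
  then show ?case unfolding mu_def using good_prior by simp
next
  case (snoc q h)
  then show ?case unfolding mu_def using good_upd by simp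
qed

lemma mu_snoc: "mu (h @ [q]) = upd (mu h) q" unfolding mu_def by simp

lemma hst_sS: "hst sS h \<omega> j = h @ replicate j (sx h, ub)"
proof (induction j)
  case 0
  then show ?case by simp
next
  case (Suc j)
  have "sx (h @ replicate j (sx h, ub)) = sx h"
  proof (cases j)
    case 0 then show ?thesis by simp
  next
    case (Suc i)
    then have "last (h @ replicate j (sx h, ub)) = (sx h, ub)" by simp
    then show ?thesis using sx_in[of h] unfolding sx_def[of "h @ replicate j (sx h, ub)"] by (auto simp: sx_def)
  qed
  then show ?case using Suc by (simp add: sS_def replicate_append_same)
qed

lemma sS_valid: "seller_valid xl xh sS"
  unfolding seller_valid_def
proof (intro conjI allI)
  show "valid_offer xl xh (sS h r)" for h r using sx_in unfolding sS_def valid_offer_def by auto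
  fix n
  show "(\<lambda>(g, r). sS (map g [0..<n]) r) \<in> (Pi\<^sub>M {0..<n} (\<lambda>_. borel) \<Otimes>\<^sub>M borel) \<rightarrow>\<^sub>M borel"
  proof (cases n)
    case 0
    then show ?thesis by (simp add: sS_def)
  next
    case (Suc k)
    have e: "(\<lambda>(g, r). sS (map g [0..<n]) r) =
      (\<lambda>z. ((if fst (fst z k) \<in> {xl..xh} then fst (fst z k) else xh), ub))"
      using Suc by (auto simp: sS_def sx_def fun_eq_iff)
    let ?PM = "Pi\<^sub>M {0..<n} (\<lambda>_::nat. borel :: offer measure) \<Otimes>\<^sub>M (borel :: real measure)"
    have "k \<in> {0..<n}" using Suc by simp
    then have m1: "(\<lambda>z. fst z k) \<in> ?PM \<rightarrow>\<^sub>M (borel :: offer measure)"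
      by (intro measurable_compose[OF measurable_fst measurable_component_singleton])
    have mf: "(fst :: offer \<Rightarrow> real) \<in> borel_measurable borel"
      using measurable_fst[of "borel::real measure" "borel::real measure"] by (simp add: borel_prod)
    have m2: "(\<lambda>z. fst (fst z k)) \<in> borel_measurable ?PM"
      using measurable_compose[OF m1 mf] by simp
    have m3: "(\<lambda>y::real. if y \<in> {xl..xh} then y else xh) \<in> borel_measurable borel" by measurable
    have m4: "(\<lambda>z. if fst (fst z k) \<in> {xl..xh} then fst (fst z k) else xh) \<in> borel_measurable ?PM"
      using measurable_compose[OF m2 m3] by simp
    have "(\<lambda>z. ((if fst (fst z k) \<in> {xl..xh} then fst (fst z k) else xh), ub)) \<in> ?PM \<rightarrow>\<^sub>M (borel \<Otimes>\<^sub>M borel)"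
      using m4 by (intro measurable_Pair) auto
    then show ?thesis unfolding e by (simp add: borel_prod)
  qed
qed

end

context setting begin

lemma rnd_prob: "prob_space rnd"
  unfolding rnd_def by (intro prob_space_PiM prob_space_uniform_measure) auto

lemma sets_unif: "sets (uniform_measure lborel {0..1::real}) = sets borel" by simp

lemma rnd_comp[measurable]: "(\<lambda>\<omega>. \<omega> k) \<in> rnd \<rightarrow>\<^sub>M (borel :: real measure)"
proof -
  have "(\<lambda>\<omega>. \<omega> k) \<in> rnd \<rightarrow>\<^sub>M uniform_measure lborel {0..1::real}"
    unfolding rnd_def by (rule measurable_component_singleton) simp
  then show ?thesis using measurable_cong_sets[OF refl sets_unif] by blast
qed

lemma rnd_space_1[simp]: "measure rnd (space rnd) = 1"
proof -
  interpret R: prob_space rnd by (rule rnd_prob)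
  show ?thesis using R.prob_space by simp
qed

lemma int_rnd_const: "(\<integral>\<omega>. c \<partial>rnd) = (c::real)"
proof -
  interpret R: prob_space rnd by (rule rnd_prob)
  show ?thesis using R.prob_space by simp
qed

lemma sx_rep: "sx (h @ replicate j (sx h, ub)) = sx h"
proof (cases j)
  case 0 then show ?thesis by simp
next
  case (Suc i)
  then have "last (h @ replicate j (sx h, ub)) = (sx h, ub)" by simp
  then show ?thesis using sx_in[of h] unfolding sx_def[of "h @ replicate j (sx h, ub)"] by (auto simp: sx_def)
qed

lemma boff_sS: "boff sS h q \<omega> k = (if k = 0 then q else (sx (h@[q]), ub))"
  using sx_rep[of "h@[q]"] by (cases k) (auto simp: boff_def sS_def hst_sS)

lemma bhist_sS: "bhist sS h q \<omega> k = (case k of 0 \<Rightarrow> h | Suc j \<Rightarrow> (h@[q]) @ replicate j (sx (h@[q]), ub))"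
  by (cases k) (auto simp: bhist_def hst_sS)

lemma disc_first_le:
  assumes "\<forall>j. g (Suc j) = b" "0 \<le> b"
  shows "disc_first \<delta> A g \<le> max (g 0) (\<delta> * b)"
proof (cases "\<exists>k. A k")
  case True
  define n where "n = (LEAST k. A k)"
  have "disc_first \<delta> A g = \<delta> ^ n * g n" unfolding disc_first_def n_def using True by simp
  also have "\<dots> \<le> max (g 0) (\<delta> * b)"
  proof (cases n)
    case 0 then show ?thesis by simp
  next
    case (Suc j)
    have "\<delta> ^ n = \<delta> * \<delta> ^ j" using Suc by simp
    moreover have "\<delta> ^ j \<le> 1" using d0 d1 by (simp add: power_le_one)
    ultimately have "\<delta> ^ n \<le> \<delta>" using d0 by (metis mult_left_mono mult.right_neutral)
    then have "\<delta> ^ n * b \<le> \<delta> * b" using assms(2) by (intro mult_right_mono) auto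
    then show ?thesis using assms(1) Suc by simp
  qed
  finally show ?thesis .
next
  case False
  then have "disc_first \<delta> A g = 0" unfolding disc_first_def by meson
  then show ?thesis using assms d0 by (simp add: le_max_iff_disj)
qed

lemma disc_first_meas:
  assumes P: "\<And>k. Measurable.pred Mx (P k)" and G: "\<And>k. G k \<in> borel_measurable Mx"
  shows "(\<lambda>z. disc_first d (\<lambda>k. P k z) (\<lambda>k. G k z)) \<in> borel_measurable Mx"
proof -
  have L: "(\<lambda>z. LEAST k. P k z) \<in> Mx \<rightarrow>\<^sub>M count_space UNIV"
    by (rule measurable_Least) (use P in \<open>simp add: pred_def\<close>)
  have E: "Measurable.pred Mx (\<lambda>z. \<exists>k. P k z)" using P by measurable
  have V: "(\<lambda>z. d ^ (LEAST k. P k z) * G (LEAST k. P k z) z) \<in> borel_measurable Mx"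
    by (rule measurable_compose_countable'[where f="\<lambda>i z. d ^ i * G i z" and I=UNIV, OF _ L])
       (use G in auto)
  have "(\<lambda>z. if \<exists>k. P k z then d ^ (LEAST k. P k z) * G (LEAST k. P k z) z else 0) \<in> borel_measurable Mx"
    using E V by measurable
  then show ?thesis unfolding disc_first_def .
qed

lemma disc_first_0: "A 0 \<Longrightarrow> disc_first \<delta> A g = g 0"
  unfolding disc_first_def by auto

lemma disc_first_1: "\<not> A 0 \<Longrightarrow> A 1 \<Longrightarrow> disc_first \<delta> A g = \<delta> * g 1"
proof -
  assume a: "\<not> A 0" "A 1"
  have "(LEAST k. A k) = 1"
  proof (rule Least_equality)
    show "A 1" using a by simp
    fix y assume ay: "A y"
    have "y \<noteq> 0"
    proof
      assume "y = 0" then show False using ay a by simp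
    qed
    then show "1 \<le> y" by simp
  qed
  then show ?thesis unfolding disc_first_def using a by auto
qed

lemma buyer_opt:
  assumes q: "valid_offer xl xh q" and th: "\<theta> \<in> {\<theta>l..\<theta>'}"
  shows "buyer_val v \<delta> sS c h q \<theta> \<le> buyer_val v \<delta> sS (\<lambda>h' q'. bS h' q' \<theta>) h q \<theta>"
proof -
  obtain x p where qxp: "q = (x, p)" by (cases q)
  have x: "x \<in> {xl..xh}" using q qxp unfolding valid_offer_def by auto
  have sxq: "sx (h @ [q]) = x" using x qxp unfolding sx_def by auto
  define u where "u = UU x \<theta>"
  have uu: "u_fun v x \<theta> = u" unfolding u_def using u_eq[of x \<theta>] x ql by auto
  have uub: "ub \<le> u" unfolding u_def using UU_ge[of x \<theta>] x th by auto
  define bo where "bo k = (if k = 0 then q else (x, ub))" for k :: nat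
  have boe: "boff sS h q \<omega> k = bo k" for \<omega> k unfolding bo_def using boff_sS sxq by simp
  define G where "G k = u_fun v (fst (bo k)) \<theta> - snd (bo k)" for k
  have G0: "G 0 = u - p" unfolding G_def bo_def using qxp uu by simp
  have GS: "\<forall>j. G (Suc j) = u - ub" unfolding G_def bo_def using uu by simp
  have val: "buyer_val v \<delta> sS c' h q \<theta> = disc_first \<delta> (\<lambda>k. c' (bhist sS h q (\<lambda>_. 0) k) (bo k)) G" for c'
  proof -
    have "buyer_val v \<delta> sS c' h q \<theta> = (\<integral>\<omega>. disc_first \<delta> (\<lambda>k. c' (bhist sS h q (\<lambda>_. 0) k) (bo k)) G \<partial>rnd)"
      unfolding buyer_val_def G_def boe
      by (rule Bochner_Integration.integral_cong) (auto simp: bhist_sS)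
    then show ?thesis by (simp add: int_rnd_const)
  qed
  have le: "buyer_val v \<delta> sS c h q \<theta> \<le> max (u - p) (\<delta> * (u - ub))"
    unfolding val using disc_first_le[OF GS] uub G0 by auto
  have A1: "bS h' (bo 1) \<theta>" for h'
  proof -
    have "(1 - \<delta>) * ub \<le> (1 - \<delta>) * u" using uub d1 by (intro mult_left_mono) auto
    then show ?thesis unfolding bS_def bb_def bo_def u_def using th x by (auto simp: algebra_simps)
  qed
  have "buyer_val v \<delta> sS (\<lambda>h' q'. bS h' q' \<theta>) h q \<theta> = max (u - p) (\<delta> * (u - ub))"
  proof (cases "bS h q \<theta>")
    case True
    then have "p - \<delta> * ub \<le> (1 - \<delta>) * u" unfolding bS_def bb_def u_def using qxp x by auto
    then have "\<delta> * (u - ub) \<le> u - p" by (simp add: algebra_simps)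
    moreover have "disc_first \<delta> (\<lambda>k. bS (bhist sS h q (\<lambda>_. 0) k) (bo k) \<theta>) G = u - p"
      using True G0 by (subst disc_first_0) (auto simp: bo_def bhist_def)
    ultimately show ?thesis unfolding val by simp
  next
    case False
    then have "\<not> p - \<delta> * ub \<le> (1 - \<delta>) * u" unfolding bS_def bb_def u_def using qxp x th by auto
    then have "\<not> \<delta> * (u - ub) \<le> u - p" by (simp add: algebra_simps)
    moreover have "disc_first \<delta> (\<lambda>k. bS (bhist sS h q (\<lambda>_. 0) k) (bo k) \<theta>) G = \<delta> * (u - ub)"
      using False A1 GS by (subst disc_first_1) (auto simp: bo_def bhist_def)
    ultimately show ?thesis unfolding val by simp
  qed
  then show ?thesis using le by simp
qed

lemma good_AE: assumes "good \<nu>" shows "AE \<theta> in \<nu>. \<theta> \<in> {\<theta>l..\<theta>'}"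
proof -
  interpret N: prob_space \<nu> using assms unfolding good_def by auto
  show ?thesis using assms N.AE_in_set_eq_1[of "{\<theta>l..\<theta>'}"] unfolding good_def
    by (simp add: N.emeasure_eq_measure)
qed

lemma seller_own: assumes gd: "good \<nu>" shows "seller_val \<delta> sS bS \<nu> h = ub"
proof -
  interpret N: prob_space \<nu> using gd unfolding good_def by auto
  have inner: "(\<integral>\<omega>. disc_first \<delta> (\<lambda>k. bS (hst sS h \<omega> k) (sS (hst sS h \<omega> k) (\<omega> k)) \<theta>)
                     (\<lambda>k. snd (sS (hst sS h \<omega> k) (\<omega> k))) \<partial>rnd) = ub" if th: "\<theta> \<in> {\<theta>l..\<theta>'}" for \<theta>
  proof -
    have "bb (sx h, ub) \<theta>"
    proof -
      have "ub \<le> UU (sx h) \<theta>" using UU_ge[of "sx h" \<theta>] sx_in[of h] th by auto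
      then have "(1 - \<delta>) * ub \<le> (1 - \<delta>) * UU (sx h) \<theta>" using d1 by (intro mult_left_mono) auto
      then show ?thesis unfolding bb_def using th sx_in[of h] by (auto simp: algebra_simps)
    qed
    then have "disc_first \<delta> (\<lambda>k. bS (hst sS h \<omega> k) (sS (hst sS h \<omega> k) (\<omega> k)) \<theta>)
                     (\<lambda>k. snd (sS (hst sS h \<omega> k) (\<omega> k))) = ub" for \<omega>
      by (subst disc_first_0) (auto simp: bS_def sS_def)
    then show ?thesis by (simp add: int_rnd_const)
  qed
  define \<phi> where "\<phi> \<theta> = disc_first \<delta> (\<lambda>k. bS (hst sS h (\<lambda>_. 0) k) (sS (hst sS h (\<lambda>_. 0) k) 0) \<theta>)
                     (\<lambda>k. snd (sS (hst sS h (\<lambda>_. 0) k) 0))" for \<theta>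
  have phi: "(\<integral>\<omega>. disc_first \<delta> (\<lambda>k. bS (hst sS h \<omega> k) (sS (hst sS h \<omega> k) (\<omega> k)) \<theta>)
                     (\<lambda>k. snd (sS (hst sS h \<omega> k) (\<omega> k))) \<partial>rnd) = \<phi> \<theta>" for \<theta>
    unfolding \<phi>_def by (simp add: hst_sS sS_def int_rnd_const)
  have pm: "\<phi> \<in> borel_measurable \<nu>"
  proof -
    have "\<phi> \<in> borel_measurable borel" unfolding \<phi>_def bS_def
      by (rule disc_first_meas) (auto simp: pred_def)
    moreover have "sets \<nu> = sets borel" using gd unfolding good_def by auto
    then have "borel_measurable \<nu> = borel_measurable borel" by (rule measurable_cong_sets) simp
    ultimately show ?thesis by metis
  qed
  have "seller_val \<delta> sS bS \<nu> h = (\<integral>\<theta>. \<phi> \<theta> \<partial>\<nu>)" unfolding seller_val_def phi ..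
  also have "\<dots> = (\<integral>\<theta>. ub \<partial>\<nu>)"
  proof (rule integral_cong_AE)
    show "\<phi> \<in> borel_measurable \<nu>" by (rule pm)
    show "(\<lambda>\<theta>. ub) \<in> borel_measurable \<nu>" by simp
    show "AE \<theta> in \<nu>. \<phi> \<theta> = ub"
      using good_AE[OF gd] by (rule eventually_mono) (use inner phi in metis)
  qed
  finally show ?thesis using N.prob_space by simp
qed

end

context setting begin

lemma bb_B: "bb q \<theta> \<Longrightarrow> \<theta> \<in> {\<theta>l..\<theta>'}" unfolding bb_def by auto

lemma dcw_Int: assumes "dcw A1" "dcw A2" shows "dcw (A1 \<inter> A2)"
  unfolding dcw_def
proof (intro ballI)
  fix x y assume x: "x \<in> A1 \<inter> A2 \<inter> {\<theta>l..\<theta>'}" and y: "y \<in> {\<theta>l..x}"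
  have "y \<in> A1" using assms(1) x y unfolding dcw_def by blast
  moreover have "y \<in> A2" using assms(2) x y unfolding dcw_def by blast
  ultimately show "y \<in> A1 \<inter> A2" by blast
qed

lemma one_step:
  assumes gd: "good \<nu>" and R: "R \<in> sets borel" "dcw R" and x: "fst q \<in> {xl..xh}"
  shows "max 0 (snd q) * measure \<nu> (R \<inter> {\<theta>. bb q \<theta>}) + \<delta> * ub * measure \<nu> (R - {\<theta>. bb q \<theta>})
          \<le> ub * measure \<nu> R"
proof -
  interpret N: prob_space \<nu> using gd unfolding good_def by auto
  have sN: "sets \<nu> = sets borel" using gd unfolding good_def by auto
  define A where "A = {\<theta>. bb q \<theta>}"
  have As: "A \<in> sets \<nu>" "R \<in> sets \<nu>" unfolding A_def using R sN by auto
  define a where "a = measure \<nu> (R \<inter> A)"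
  define r where "r = measure \<nu> R"
  have diff: "measure \<nu> (R - A) = r - a"
  proof -
    have "R - A = R - (R \<inter> A)" by auto
    then show ?thesis unfolding a_def r_def using As by (simp add: N.finite_measure_Diff)
  qed
  have a0: "0 \<le> a" unfolding a_def by simp
  have ar: "a \<le> r" unfolding a_def r_def using As by (intro N.finite_measure_mono) auto
  have ubp: "0 < ub" by (rule ub_pos)
  obtain p where p: "p = snd q" by simp
  have main: "max 0 p * a + \<delta> * ub * (r - a) \<le> ub * r"
  proof (cases "p \<le> 0")
    case True
    have "\<delta> * ub * (r - a) \<le> 1 * ub * (r - a)" using d1 ubp ar by (intro mult_right_mono) auto
    then show ?thesis using True a0 ubp by simp
  next
    case False
    then have pp: "max 0 p = p" by simp
    show ?thesis
    proof (cases "p - \<delta> * ub \<le> 0")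
      case True
      have "(p - \<delta> * ub) * a \<le> 0" using True a0 by (simp add: mult_nonpos_nonneg)
      moreover have "0 \<le> (1 - \<delta>) * ub * r" using d1 ubp a0 ar by simp
      ultimately show ?thesis unfolding pp by (simp add: algebra_simps)
    next
      case False
      define c where "c = (p - \<delta> * ub) / (1 - \<delta>)"
      have d1': "0 < 1 - \<delta>" using d1 by simp
      have c0: "0 < c" unfolding c_def using False d1' by simp
      have pc: "p - \<delta> * ub = (1 - \<delta>) * c" unfolding c_def using d1' by simp
      have sub: "R \<inter> A \<subseteq> R \<inter> {\<theta>. c \<le> UU xh \<theta>}"
      proof
        fix \<theta> assume th: "\<theta> \<in> R \<inter> A"
        then have "p - \<delta> * ub \<le> (1 - \<delta>) * UU (fst q) \<theta>" unfolding A_def bb_def using x p by auto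
        also have "\<dots> \<le> (1 - \<delta>) * UU xh \<theta>" using UU_le[of "fst q" \<theta>] x ql d1' by (intro mult_left_mono) auto
        finally have "(1 - \<delta>) * c \<le> (1 - \<delta>) * UU xh \<theta>" using pc by simp
        then have "c \<le> UU xh \<theta>" using d1' by simp
        then show "\<theta> \<in> R \<inter> {\<theta>. c \<le> UU xh \<theta>}" using th by auto
      qed
      have "a \<le> measure \<nu> (R \<inter> {\<theta>. c \<le> UU xh \<theta>})"
        unfolding a_def using sub R sN by (intro N.finite_measure_mono) auto
      moreover have "c * measure \<nu> (R \<inter> {\<theta>. c \<le> UU xh \<theta>}) \<le> ub * r"
        using gd R c0 unfolding good_def Q_def r_def by blast
      ultimately have "c * a \<le> ub * r" using c0 by (meson mult_left_mono less_imp_le order_trans)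
      then have i1: "(1 - \<delta>) * (c * a) \<le> (1 - \<delta>) * (ub * r)" using d1' by (intro mult_left_mono) auto
      have e1: "(p - \<delta> * ub) * a = (1 - \<delta>) * (c * a)" using pc by (simp add: mult.assoc)
      have e2: "p * a + \<delta> * ub * (r - a) - ub * r = (p - \<delta> * ub) * a - (1 - \<delta>) * (ub * r)"
        by (simp add: algebra_simps)
      show ?thesis unfolding pp using i1 e1 e2 by linarith
    qed
  qed
  then show ?thesis unfolding A_def[symmetric] a_def[symmetric] r_def[symmetric] diff p by simp
qed

lemma det:
  assumes gd: "good \<nu>" and val: "\<And>k. fst (o' k) \<in> {xl..xh}"
  shows "(\<integral>\<theta>. max 0 (disc_first \<delta> (\<lambda>k. bb (o' k) \<theta>) (\<lambda>k. snd (o' k))) \<partial>\<nu>) \<le> ub"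
proof -
  interpret N: prob_space \<nu> using gd unfolding good_def by auto
  have sN: "sets \<nu> = sets borel" using gd unfolding good_def by auto
  have mN: "measurable \<nu> = measurable borel" by (intro ext measurable_cong_sets) (auto simp: sN)
  have ubp: "0 < ub" by (rule ub_pos)
  define A where "A k = {\<theta>. bb (o' k) \<theta>}" for k
  define R where "R k = {\<theta>. \<forall>j<k. \<not> bb (o' j) \<theta>}" for k
  define pp where "pp k = max 0 (snd (o' k))" for k
  define D where "D \<theta> = max 0 (disc_first \<delta> (\<lambda>k. bb (o' k) \<theta>) (\<lambda>k. snd (o' k)))" for \<theta>
  have R0: "R 0 = UNIV" unfolding R_def by auto
  have RS: "R (Suc k) = R k - A k" for k unfolding R_def A_def by (auto simp: less_Suc_eq)
  have Rs: "R k \<in> sets borel \<and> dcw (R k)" for k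
  proof (induction k)
    case 0 then show ?case unfolding R0 dcw_def by auto
  next
    case (Suc k)
    have "R k - A k = R k \<inter> {\<theta>. \<not> bb (o' k) \<theta>}" unfolding A_def by auto
    moreover have "dcw (R k \<inter> {\<theta>. \<not> bb (o' k) \<theta>})"
      using Suc nbb_dcw[of "o' k"] by (intro dcw_Int) auto
    ultimately show ?case unfolding RS using Suc nbb_sets[of "o' k"] by auto
  qed
  have As: "A k \<in> sets borel" for k unfolding A_def by simp
  define r where "r k = measure \<nu> (R k)" for k
  define a where "a k = measure \<nu> (R k \<inter> A k)" for k
  have step: "pp k * a k + \<delta> * ub * r (Suc k) \<le> ub * r k" for k
  proof -
    have "max 0 (snd (o' k)) * measure \<nu> (R k \<inter> {\<theta>. bb (o' k) \<theta>}) + \<delta> * ub * measure \<nu> (R k - {\<theta>. bb (o' k) \<theta>})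
          \<le> ub * measure \<nu> (R k)"
      by (rule one_step[OF gd conjunct1[OF Rs] conjunct2[OF Rs] val[of k]])
    then show ?thesis unfolding pp_def a_def r_def RS A_def .
  qed
  have tele: "(\<Sum>i<n. \<delta> ^ i * pp i * a i) + \<delta> ^ n * ub * r n \<le> ub" for n
  proof (induction n)
    case 0
    have "space \<nu> = UNIV" using sets_eq_imp_space_eq[OF sN] by simp
    then have "r 0 = 1" unfolding r_def R0 using N.prob_space by simp
    then show ?case by simp
  next
    case (Suc n)
    have "\<delta> ^ n * (pp n * a n + \<delta> * ub * r (Suc n)) \<le> \<delta> ^ n * (ub * r n)"
      using step[of n] d0 by (intro mult_left_mono) auto
    then have "\<delta> ^ n * pp n * a n + \<delta> ^ Suc n * ub * r (Suc n) \<le> \<delta> ^ n * ub * r n"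
      by (simp add: algebra_simps)
    then show ?case using Suc by simp
  qed
  have partial: "(\<Sum>i<n. \<delta> ^ i * pp i * a i) \<le> ub" for n
  proof -
    have "0 \<le> \<delta> ^ n * ub * r n" unfolding r_def using d0 ubp by simp
    then show ?thesis using tele[of n] by linarith
  qed
  have pp0: "0 \<le> pp k" for k unfolding pp_def by simp
  have a0: "0 \<le> a k" for k unfolding a_def by simp
  have decomp: "ennreal (D \<theta>) = (\<Sum>k. ennreal (\<delta> ^ k * pp k) * indicator (R k \<inter> A k) \<theta>)" for \<theta>
  proof (cases "\<exists>k. bb (o' k) \<theta>")
    case True
    define n where "n = (LEAST k. bb (o' k) \<theta>)"
    have bn: "bb (o' n) \<theta>" unfolding n_def using True by (rule LeastI_ex)
    have ind: "indicator (R k \<inter> A k) \<theta> = (if k = n then 1 else (0::ennreal))" for k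
    proof -
      have "\<theta> \<in> R k \<inter> A k \<longleftrightarrow> k = n"
      proof
        assume "\<theta> \<in> R k \<inter> A k"
        then have "bb (o' k) \<theta>" "\<forall>j<k. \<not> bb (o' j) \<theta>" unfolding R_def A_def by auto
        then show "k = n" unfolding n_def by (metis Least_equality not_less)
      next
        assume "k = n"
        then show "\<theta> \<in> R k \<inter> A k" unfolding R_def A_def using bn not_less_Least n_def by blast
      qed
      then show ?thesis by (auto simp: indicator_def)
    qed
    have "(\<Sum>k. ennreal (\<delta> ^ k * pp k) * indicator (R k \<inter> A k) \<theta>) =
          (\<Sum>k. if k = n then ennreal (\<delta> ^ k * pp k) else 0)"
      unfolding ind by (intro suminf_cong) auto
    also have "\<dots> = ennreal (\<delta> ^ n * pp n)" using sums_single[of n "\<lambda>k. ennreal (\<delta> ^ k * pp k)"]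
      by (rule sums_unique[symmetric])
    also have "\<delta> ^ n * pp n = D \<theta>"
      unfolding D_def pp_def disc_first_def n_def[symmetric] using True d0
    proof -
      have c0: "0 \<le> \<delta> ^ n" using d0 by simp
      have "max 0 (\<delta> ^ n * snd (o' n)) = \<delta> ^ n * max 0 (snd (o' n))"
      proof (cases "0 \<le> snd (o' n)")
        case True then show ?thesis using c0 by simp
      next
        case False
        then have "\<delta> ^ n * snd (o' n) \<le> 0" using c0 by (simp add: mult_nonneg_nonpos)
        then show ?thesis using False by simp
      qed
      then show "\<delta> ^ n * max 0 (snd (o' n)) = max 0 (if \<exists>k. bb (o' k) \<theta> then \<delta> ^ n * snd (o' n) else 0)"
        using True by simp
    qed
    finally show ?thesis by simp
  next
    case False
    then have "indicator (R k \<inter> A k) \<theta> = (0::ennreal)" for k unfolding A_def by auto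
    moreover have "D \<theta> = 0" unfolding D_def disc_first_def using False by auto
    ultimately show ?thesis by simp
  qed
  have Dm: "D \<in> borel_measurable \<nu>"
  proof -
    have "(\<lambda>\<theta>. disc_first \<delta> (\<lambda>k. bb (o' k) \<theta>) (\<lambda>k. snd (o' k))) \<in> borel_measurable borel"
      by (rule disc_first_meas) (auto simp: pred_def)
    then have "D \<in> borel_measurable borel" unfolding D_def by measurable
    moreover have "borel_measurable \<nu> = borel_measurable borel" by (rule measurable_cong_sets) (auto simp: sN)
    ultimately show ?thesis by metis
  qed
  have "(\<integral>\<^sup>+ \<theta>. ennreal (D \<theta>) \<partial>\<nu>) = (\<Sum>k. \<integral>\<^sup>+ \<theta>. ennreal (\<delta> ^ k * pp k) * indicator (R k \<inter> A k) \<theta> \<partial>\<nu>)"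
    unfolding decomp
  proof (rule nn_integral_suminf)
    fix k show "(\<lambda>\<theta>. ennreal (\<delta> ^ k * pp k) * indicator (R k \<inter> A k) \<theta>) \<in> borel_measurable \<nu>"
      using Rs[of k] As[of k] sN by (intro borel_measurable_times_ennreal borel_measurable_indicator) auto
  qed
  also have "\<dots> = (\<Sum>k. ennreal (\<delta> ^ k * pp k * a k))"
  proof (intro suminf_cong)
    fix k
    have "R k \<inter> A k \<in> sets \<nu>" using Rs[of k] As[of k] sN by auto
    then have "(\<integral>\<^sup>+ \<theta>. ennreal (\<delta> ^ k * pp k) * indicator (R k \<inter> A k) \<theta> \<partial>\<nu>) = ennreal (\<delta> ^ k * pp k) * emeasure \<nu> (R k \<inter> A k)"
      by (rule nn_integral_cmult_indicator)
    also have "\<dots> = ennreal (\<delta> ^ k * pp k * a k)"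
      unfolding a_def N.emeasure_eq_measure using d0 pp0[of k] a0[of k] by (simp add: ennreal_mult)
    finally show "(\<integral>\<^sup>+ \<theta>. ennreal (\<delta> ^ k * pp k) * indicator (R k \<inter> A k) \<theta> \<partial>\<nu>) = ennreal (\<delta> ^ k * pp k * a k)" .
  qed
  also have "\<dots> \<le> ennreal ub"
  proof (rule suminf_le_const)
    show "summable (\<lambda>k. ennreal (\<delta> ^ k * pp k * a k))" by simp
    fix n
    have "(\<Sum>k<n. ennreal (\<delta> ^ k * pp k * a k)) = ennreal (\<Sum>k<n. \<delta> ^ k * pp k * a k)"
      using d0 pp0 a0 by (intro sum_ennreal) auto
    then show "(\<Sum>k<n. ennreal (\<delta> ^ k * pp k * a k)) \<le> ennreal ub" using partial[of n] ennreal_leI by simp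
  qed
  finally have nn: "(\<integral>\<^sup>+ \<theta>. ennreal (D \<theta>) \<partial>\<nu>) \<le> ennreal ub" .
  have "(\<integral>\<theta>. D \<theta> \<partial>\<nu>) = enn2real (\<integral>\<^sup>+ \<theta>. ennreal (D \<theta>) \<partial>\<nu>)"
  proof (rule integral_eq_nn_integral)
    show "D \<in> borel_measurable \<nu>" by (rule Dm)
    show "AE \<theta> in \<nu>. 0 \<le> D \<theta>" by (simp add: D_def)
  qed
  also have "\<dots> \<le> ub" using nn ubp by (intro enn2real_leI) auto
  finally show ?thesis unfolding D_def .
qed

end

context setting begin

lemma hst_eq: "hst s' h \<omega> k = h @ map (\<lambda>j. s' (hst s' h \<omega> j) (\<omega> j)) [0..<k]"
  by (induction k) auto

lemma length_hst: "length (hst s' h \<omega> k) = length h + k"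
  by (induction k) auto

lemma oo_meas:
  assumes sv: "seller_valid xl xh s'"
  shows "(\<lambda>\<omega>. s' (hst s' h \<omega> k) (\<omega> k)) \<in> rnd \<rightarrow>\<^sub>M (borel :: offer measure)"
proof (induction k rule: less_induct)
  case (less k)
  define n where "n = length h + k"
  have Fn: "(\<lambda>(g, r). s' (map g [0..<n]) r) \<in> (Pi\<^sub>M {0..<n} (\<lambda>_::nat. borel :: offer measure) \<Otimes>\<^sub>M (borel :: real measure)) \<rightarrow>\<^sub>M (borel :: offer measure)"
    using sv unfolding seller_valid_def by blast
  define Gm where "Gm \<omega> = (\<lambda>i\<in>{0..<n}. (hst s' h \<omega> k) ! i)" for \<omega>
  have coord: "(\<lambda>\<omega>. (hst s' h \<omega> k) ! i) \<in> rnd \<rightarrow>\<^sub>M (borel :: offer measure)" if i: "i \<in> {0..<n}" for i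
  proof (cases "i < length h")
    case True
    have "(hst s' h \<omega> k) ! i = h ! i" for \<omega> by (subst hst_eq) (simp add: nth_append True)
    then have "(\<lambda>\<omega>. (hst s' h \<omega> k) ! i) = (\<lambda>\<omega>. h ! i)" by (simp add: fun_eq_iff)
    then show ?thesis by simp
  next
    case False
    then have j: "i - length h < k" using i n_def by auto
    have "(hst s' h \<omega> k) ! i = s' (hst s' h \<omega> (i - length h)) (\<omega> (i - length h))" for \<omega>
      by (subst hst_eq) (simp add: nth_append False j)
    then have "(\<lambda>\<omega>. (hst s' h \<omega> k) ! i) = (\<lambda>\<omega>. s' (hst s' h \<omega> (i - length h)) (\<omega> (i - length h)))"
      by (simp add: fun_eq_iff)
    then show ?thesis using less.IH[OF j] by simp
  qed
  have Gmm: "Gm \<in> rnd \<rightarrow>\<^sub>M Pi\<^sub>M {0..<n} (\<lambda>_::nat. borel :: offer measure)"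
    unfolding Gm_def by (rule measurable_restrict) (rule coord)
  have pm: "(\<lambda>\<omega>. (Gm \<omega>, \<omega> k)) \<in> rnd \<rightarrow>\<^sub>M (Pi\<^sub>M {0..<n} (\<lambda>_::nat. borel :: offer measure) \<Otimes>\<^sub>M (borel :: real measure))"
    using Gmm rnd_comp by (intro measurable_Pair) auto
  have c: "(\<lambda>\<omega>. case (Gm \<omega>, \<omega> k) of (g, r) \<Rightarrow> s' (map g [0..<n]) r) \<in> rnd \<rightarrow>\<^sub>M (borel :: offer measure)"
    using measurable_comp[OF pm Fn] by (simp add: comp_def)
  have "map (Gm \<omega>) [0..<n] = hst s' h \<omega> k" for \<omega>
  proof -
    have "map (Gm \<omega>) [0..<n] = map (\<lambda>i. (hst s' h \<omega> k) ! i) [0..<n]"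
      unfolding Gm_def by (intro map_cong) auto
    also have "\<dots> = hst s' h \<omega> k" using length_hst[of s' h \<omega> k] unfolding n_def by (metis map_nth)
    finally show ?thesis .
  qed
  then show ?case using c by simp
qed

lemma bb_pred:
  assumes qf: "qf \<in> Mx \<rightarrow>\<^sub>M (borel :: offer measure)" and tf: "tf \<in> borel_measurable Mx"
  shows "Measurable.pred Mx (\<lambda>z. bb (qf z) (tf z))"
proof -
  have mf: "(fst :: offer \<Rightarrow> real) \<in> borel_measurable borel"
    using measurable_fst[of "borel::real measure" "borel::real measure"] by (simp add: borel_prod)
  have ms: "(snd :: offer \<Rightarrow> real) \<in> borel_measurable borel"
    using measurable_snd[of "borel::real measure" "borel::real measure"] by (simp add: borel_prod)
  have a[measurable]: "(\<lambda>z. fst (qf z)) \<in> borel_measurable Mx" using measurable_compose[OF qf mf] by simp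
  have b[measurable]: "(\<lambda>z. snd (qf z)) \<in> borel_measurable Mx" using measurable_compose[OF qf ms] by simp
  note tf[measurable]
  have w: "(\<lambda>z. (1 - \<delta>) * UU (fst (qf z)) (tf z) - snd (qf z) + \<delta> * ub) \<in> borel_measurable Mx"
    unfolding UU_def by measurable
  define S1 where "S1 = tf -` {\<theta>l..\<theta>'} \<inter> space Mx"
  define S2 where "S2 = (\<lambda>z. fst (qf z)) -` {xl..xh} \<inter> space Mx"
  define S3 where "S3 = {z \<in> space Mx. 0 \<le> (1 - \<delta>) * UU (fst (qf z)) (tf z) - snd (qf z) + \<delta> * ub}"
  have s1: "S1 \<in> sets Mx" unfolding S1_def by (rule measurable_sets[OF tf]) simp
  have s2: "S2 \<in> sets Mx" unfolding S2_def by (rule measurable_sets[OF a]) simp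
  have s3: "S3 \<in> sets Mx" using w unfolding S3_def borel_measurable_iff_ge by blast
  have "{z \<in> space Mx. bb (qf z) (tf z)} = S1 \<inter> ((space Mx - S2) \<union> S3)"
    unfolding S1_def S2_def S3_def bb_def by auto
  then have "{z \<in> space Mx. bb (qf z) (tf z)} \<in> sets Mx" using s1 s2 s3 by auto
  then show ?thesis by (simp add: pred_def)
qed

definition Bd where "Bd = \<delta> * ub + (1 - \<delta>) * UU xh \<theta>'"

lemma phi_bound:
  assumes val: "\<And>k. fst (o' k) \<in> {xl..xh}"
  shows "0 \<le> max 0 (disc_first \<delta> (\<lambda>k. bb (o' k) \<theta>) (\<lambda>k. snd (o' k))) \<and>
         max 0 (disc_first \<delta> (\<lambda>k. bb (o' k) \<theta>) (\<lambda>k. snd (o' k))) \<le> Bd"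
proof -
  have ubp: "0 < ub" by (rule ub_pos)
  have Bd0: "0 \<le> Bd" unfolding Bd_def using d0 d1 ubp U_ge[of \<theta>'] cutoff by auto
  show ?thesis
  proof (cases "\<exists>k. bb (o' k) \<theta>")
    case True
    define n where "n = (LEAST k. bb (o' k) \<theta>)"
    have bn: "bb (o' n) \<theta>" unfolding n_def using True by (rule LeastI_ex)
    have th: "\<theta> \<in> {\<theta>l..\<theta>'}" using bn by (rule bb_B)
    have "snd (o' n) \<le> \<delta> * ub + (1 - \<delta>) * UU (fst (o' n)) \<theta>" using bn val[of n] unfolding bb_def by auto
    also have "\<dots> \<le> Bd"
    proof -
      have "UU (fst (o' n)) \<theta> \<le> UU xh \<theta>" using UU_le[of "fst (o' n)" \<theta>] val[of n] ql by auto
      also have "\<dots> \<le> UU xh \<theta>'" using UU_mono[of xh \<theta> \<theta>'] th ql qh by auto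
      finally show ?thesis unfolding Bd_def using d1 by (simp add: mult_left_mono)
    qed
    finally have pB: "snd (o' n) \<le> Bd" .
    have dn: "0 \<le> \<delta> ^ n" "\<delta> ^ n \<le> 1" using d0 d1 by (auto simp: power_le_one)
    have "disc_first \<delta> (\<lambda>k. bb (o' k) \<theta>) (\<lambda>k. snd (o' k)) = \<delta> ^ n * snd (o' n)"
      unfolding disc_first_def n_def using True by simp
    moreover have "max 0 (\<delta> ^ n * snd (o' n)) \<le> Bd"
    proof (cases "0 \<le> snd (o' n)")
      case True
      have "\<delta> ^ n * snd (o' n) \<le> 1 * snd (o' n)" using dn True by (intro mult_right_mono) auto
      then show ?thesis using pB Bd0 by simp
    next
      case False
      then have "\<delta> ^ n * snd (o' n) \<le> 0" using dn by (simp add: mult_nonneg_nonpos)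
      then show ?thesis using Bd0 by simp
    qed
    ultimately show ?thesis by simp
  next
    case False
    then have "disc_first \<delta> (\<lambda>k. bb (o' k) \<theta>) (\<lambda>k. snd (o' k)) = 0" unfolding disc_first_def by meson
    then show ?thesis using Bd0 by simp
  qed
qed

lemma seller_dev:
  assumes gd: "good \<nu>" and sv: "seller_valid xl xh s'"
  shows "seller_val \<delta> s' bS \<nu> h \<le> ub"
proof -
  interpret N: prob_space \<nu> using gd unfolding good_def by auto
  interpret R: prob_space rnd by (rule rnd_prob)
  interpret P: pair_prob_space \<nu> rnd by unfold_locales
  have sN: "sets \<nu> = sets borel" using gd unfolding good_def by auto
  have spN: "space \<nu> = UNIV" using sets_eq_imp_space_eq[OF sN] by simp
  have ubp: "0 < ub" by (rule ub_pos)
  define ofr where "ofr k \<omega> = s' (hst s' h \<omega> k) (\<omega> k)" for k \<omega>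
  have ofrm: "ofr k \<in> rnd \<rightarrow>\<^sub>M (borel :: offer measure)" for k unfolding ofr_def by (rule oo_meas[OF sv])
  have val: "fst (ofr k \<omega>) \<in> {xl..xh}" for k \<omega>
    using sv unfolding seller_valid_def valid_offer_def ofr_def by blast
  define \<Phi> where "\<Phi> \<theta> \<omega> = disc_first \<delta> (\<lambda>k. bb (ofr k \<omega>) \<theta>) (\<lambda>k. snd (ofr k \<omega>))" for \<theta> \<omega>
  define \<Phi>p where "\<Phi>p \<theta> \<omega> = max 0 (\<Phi> \<theta> \<omega>)" for \<theta> \<omega>
  have sv_eq: "seller_val \<delta> s' bS \<nu> h = (\<integral>\<theta>. (\<integral>\<omega>. \<Phi> \<theta> \<omega> \<partial>rnd) \<partial>\<nu>)"
    unfolding seller_val_def \<Phi>_def ofr_def bS_def ..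
  have bnd: "0 \<le> \<Phi>p \<theta> \<omega> \<and> \<Phi>p \<theta> \<omega> \<le> Bd" for \<theta> \<omega>
    unfolding \<Phi>p_def \<Phi>_def using phi_bound[of "\<lambda>k. ofr k \<omega>" \<theta>] val by blast
  have fstm: "fst \<in> borel_measurable (\<nu> \<Otimes>\<^sub>M rnd)"
  proof -
    have "fst \<in> (\<nu> \<Otimes>\<^sub>M rnd) \<rightarrow>\<^sub>M \<nu>" by (rule measurable_fst)
    moreover have "(\<nu> \<Otimes>\<^sub>M rnd) \<rightarrow>\<^sub>M \<nu> = (\<nu> \<Otimes>\<^sub>M rnd) \<rightarrow>\<^sub>M borel"
      by (rule measurable_cong_sets) (auto simp: sN)
    ultimately show ?thesis by metis
  qed
  have ofrm2: "(\<lambda>z. ofr k (snd z)) \<in> (\<nu> \<Otimes>\<^sub>M rnd) \<rightarrow>\<^sub>M (borel :: offer measure)" for k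
    by (rule measurable_compose[OF measurable_snd ofrm])
  have Phim: "(\<lambda>z. \<Phi> (fst z) (snd z)) \<in> borel_measurable (\<nu> \<Otimes>\<^sub>M rnd)"
    unfolding \<Phi>_def
  proof (rule disc_first_meas)
    fix k
    show "Measurable.pred (\<nu> \<Otimes>\<^sub>M rnd) (\<lambda>z. bb (ofr k (snd z)) (fst z))"
      by (rule bb_pred[OF ofrm2 fstm])
    have ms: "(snd :: offer \<Rightarrow> real) \<in> borel_measurable borel"
      using measurable_snd[of "borel::real measure" "borel::real measure"] by (simp add: borel_prod)
    show "(\<lambda>z. snd (ofr k (snd z))) \<in> borel_measurable (\<nu> \<Otimes>\<^sub>M rnd)"
      using measurable_compose[OF ofrm2 ms] by simp
  qed
  have Phipm: "(\<lambda>z. \<Phi>p (fst z) (snd z)) \<in> borel_measurable (\<nu> \<Otimes>\<^sub>M rnd)"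
    unfolding \<Phi>p_def using Phim by measurable
  have Phipm': "case_prod \<Phi>p \<in> borel_measurable (\<nu> \<Otimes>\<^sub>M rnd)"
    using Phipm by (simp add: case_prod_beta')
  have Phim': "case_prod \<Phi> \<in> borel_measurable (\<nu> \<Otimes>\<^sub>M rnd)"
    using Phim by (simp add: case_prod_beta')
  have Pint: "integrable (\<nu> \<Otimes>\<^sub>M rnd) (case_prod \<Phi>p)"
    by (rule P.integrable_const_bound[where B=Bd]) (use bnd Phipm' in auto)
  have inner_m: "(\<lambda>\<omega>. \<Phi> \<theta> \<omega>) \<in> borel_measurable rnd" for \<theta>
    using measurable_Pair2[OF Phim', of \<theta>] spN by simp
  have innerp_m: "(\<lambda>\<omega>. \<Phi>p \<theta> \<omega>) \<in> borel_measurable rnd" for \<theta>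
    using measurable_Pair2[OF Phipm', of \<theta>] spN by simp
  have innerp_int: "integrable rnd (\<lambda>\<omega>. \<Phi>p \<theta> \<omega>)" for \<theta>
    by (rule R.integrable_const_bound[where B=Bd]) (use bnd innerp_m in auto)
  define V where "V \<theta> = (\<integral>\<omega>. \<Phi> \<theta> \<omega> \<partial>rnd)" for \<theta>
  define Vp where "Vp \<theta> = (\<integral>\<omega>. \<Phi>p \<theta> \<omega> \<partial>rnd)" for \<theta>
  have VVp: "V \<theta> \<le> Vp \<theta>" for \<theta>
  proof (cases "integrable rnd (\<lambda>\<omega>. \<Phi> \<theta> \<omega>)")
    case True
    show ?thesis unfolding V_def Vp_def
      by (rule Bochner_Integration.integral_mono[OF True innerp_int]) (simp add: \<Phi>p_def)
  next
    case False
    then have "V \<theta> = 0" unfolding V_def by (rule not_integrable_integral_eq)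
    moreover have "0 \<le> Vp \<theta>" unfolding Vp_def using bnd by (intro Bochner_Integration.integral_nonneg) auto
    ultimately show ?thesis by simp
  qed
  have Vpm: "Vp \<in> borel_measurable \<nu>"
    unfolding Vp_def by (rule R.borel_measurable_lebesgue_integral[OF Phipm'])
  have Vpb: "norm (Vp \<theta>) \<le> Bd" for \<theta>
  proof -
    have "0 \<le> Vp \<theta>" unfolding Vp_def using bnd by (intro Bochner_Integration.integral_nonneg) auto
    moreover have "Vp \<theta> \<le> (\<integral>\<omega>. Bd \<partial>rnd)" unfolding Vp_def
      by (rule Bochner_Integration.integral_mono[OF innerp_int]) (use bnd in auto)
    ultimately show ?thesis using R.prob_space by simp
  qed
  have Vpint: "integrable \<nu> Vp" by (rule N.integrable_const_bound[where B=Bd]) (use Vpb Vpm in auto)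
  define W where "W \<omega> = (\<integral>\<theta>. \<Phi>p \<theta> \<omega> \<partial>\<nu>)" for \<omega>
  have Wb: "W \<omega> \<le> ub" for \<omega>
    unfolding W_def \<Phi>p_def \<Phi>_def using det[OF gd, of "\<lambda>k. ofr k \<omega>"] val by blast
  have fub: "(\<integral>\<omega>. W \<omega> \<partial>rnd) = (\<integral>\<theta>. Vp \<theta> \<partial>\<nu>)"
    unfolding W_def Vp_def by (rule P.Fubini_integral[OF Pint])
  have Wint: "(\<integral>\<omega>. W \<omega> \<partial>rnd) \<le> ub"
  proof (cases "integrable rnd W")
    case True
    have "(\<integral>\<omega>. W \<omega> \<partial>rnd) \<le> (\<integral>\<omega>. ub \<partial>rnd)"
      by (rule Bochner_Integration.integral_mono[OF True]) (use Wb in auto)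
    then show ?thesis using R.prob_space by simp
  next
    case False
    then show ?thesis using ubp by (simp add: not_integrable_integral_eq)
  qed
  show ?thesis
  proof (cases "integrable \<nu> V")
    case True
    have "(\<integral>\<theta>. V \<theta> \<partial>\<nu>) \<le> (\<integral>\<theta>. Vp \<theta> \<partial>\<nu>)"
      by (rule Bochner_Integration.integral_mono[OF True Vpint]) (rule VVp)
    then show ?thesis using sv_eq fub Wint unfolding V_def by simp
  next
    case False
    then show ?thesis using sv_eq ubp unfolding V_def by (simp add: not_integrable_integral_eq)
  qed
qed

end

theorem theorem1:
  fixes v F f :: "real \<Rightarrow> real"
    and \<theta>l \<theta>h xl xh m M \<delta> \<theta>' :: real
  assumes types: "\<theta>l < \<theta>h"
    and quantities: "0 < xl" "xl < xh"
    and A1_concave: "strictly_concave_on {0..xh} v"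
    and A1_C1: "C1_on_interval v 0 xh"
    and A1_zero: "v 0 = 0"
    and f_meas: "set_borel_measurable borel {\<theta>l..\<theta>h} f"
    and F_cdf: "\<forall>\<theta>\<in>{\<theta>l..\<theta>h}. F \<theta> = integral {\<theta>l..\<theta>} f"
    and F_total: "F \<theta>h = 1"
    and A2_bounds: "0 < m" "\<forall>\<theta>\<in>{\<theta>l..\<theta>h}. m \<le> f \<theta> \<and> f \<theta> \<le> M"
    and A2_mono: "strict_mono_on {\<theta>l..\<theta>h} (\<lambda>\<theta>. \<theta> - (1 - F \<theta>) / f \<theta>)"
    and A3: "0 < xe v xh \<theta>l" "xe v xh \<theta>l \<le> xl"
    and A4: "\<forall>\<theta>\<in>{\<theta>l..\<theta>h}.
               0 \<le> v (xe v xh \<theta>) + (\<theta> - (1 - F \<theta>) / f \<theta>) * xe v xh \<theta>"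
    and discount: "0 \<le> \<delta>" "\<delta> < 1"
    and cutoff: "\<theta>' \<in> {\<theta>l..\<theta>h}"
  shows "\<exists>s b \<mu>.
           is_PBE v xl xh \<theta>l \<theta>' \<delta> (cond_type_dist \<theta>l \<theta>h f \<theta>') s b \<mu>
         \<and> (\<forall>r. s [] r = (xh, ubar v xh \<theta>l))
         \<and> (\<forall>\<theta>\<in>{\<theta>l..\<theta>'}. b [] (xh, ubar v xh \<theta>l) \<theta>)
         \<and> seller_val \<delta> s b (\<mu> []) [] = ubar v xh \<theta>l"
proof -
  interpret S: setting v F f \<theta>l \<theta>h xl xh m M \<delta> \<theta>'
    by unfold_locales (use assms in auto)
  have gm: "S.good (S.mu h)" for h by (rule S.good_mu)
  have pbe: "is_PBE v xl xh \<theta>l \<theta>' \<delta> (cond_type_dist \<theta>l \<theta>h f \<theta>') S.sS S.bS S.mu"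
    unfolding is_PBE_def
  proof (intro conjI allI impI)
    show "seller_valid xl xh S.sS" by (rule S.sS_valid)
    show "{\<theta>. S.bS h q \<theta>} \<in> sets borel" for h q unfolding S.bS_def by (rule S.bb_sets)
    show "prob_space (S.mu h)" for h using gm unfolding S.good_def by auto
    show "sets (S.mu h) = sets borel" for h using gm unfolding S.good_def by auto
    show "emeasure (S.mu h) {\<theta>l..\<theta>'} = 1" for h using gm unfolding S.good_def by auto
    show "S.mu [] = cond_type_dist \<theta>l \<theta>h f \<theta>'" unfolding S.mu_def S.prior_def by simp
    show "S.mu (h @ [q]) = uniform_measure (S.mu h) {\<theta>. \<not> S.bS h q \<theta>}"
      if "emeasure (S.mu h) {\<theta>. \<not> S.bS h q \<theta>} \<noteq> 0" for h q
      using that unfolding S.mu_snoc S.upd_def S.bS_def by simp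
    show "buyer_val v \<delta> S.sS c h q \<theta> \<le> buyer_val v \<delta> S.sS (\<lambda>h' q'. S.bS h' q' \<theta>) h q \<theta>"
      if "valid_offer xl xh q" "\<theta> \<in> {\<theta>l..\<theta>'}" for h q \<theta> c
      by (rule S.buyer_opt[OF that])
    show "seller_val \<delta> s' S.bS (S.mu h) h \<le> seller_val \<delta> S.sS S.bS (S.mu h) h"
      if "seller_valid xl xh s'" for h s'
      using S.seller_dev[OF gm that] S.seller_own[OF gm] by simp
  qed
  show ?thesis
  proof (intro exI conjI)
    show "is_PBE v xl xh \<theta>l \<theta>' \<delta> (cond_type_dist \<theta>l \<theta>h f \<theta>') S.sS S.bS S.mu" by (rule pbe)
    show "\<forall>r. S.sS [] r = (xh, ubar v xh \<theta>l)" unfolding S.sS_def S.sx_def S.ub_def by simp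
    show "\<forall>\<theta>\<in>{\<theta>l..\<theta>'}. S.bS [] (xh, ubar v xh \<theta>l) \<theta>"
    proof
      fix \<theta> assume th: "\<theta> \<in> {\<theta>l..\<theta>'}"
      have "S.ub \<le> S.UU xh \<theta>" using S.U_ge[of \<theta>] th by auto
      then have "(1 - \<delta>) * S.ub \<le> (1 - \<delta>) * S.UU xh \<theta>" using discount by (intro mult_left_mono) auto
      then show "S.bS [] (xh, ubar v xh \<theta>l) \<theta>"
        unfolding S.bS_def S.bb_def S.ub_def[symmetric] using th quantities by (auto simp: algebra_simps)
    qed
    show "seller_val \<delta> S.sS S.bS (S.mu []) [] = ubar v xh \<theta>l"
      using S.seller_own[OF gm] unfolding S.ub_def by simp
  qed
qed

end
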